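(* Let $2\le r<m\le n$ and $k\ge1$. Then $\mathcal Z^{m,n}_{r,k}$ has at least $1+\lfloor k/2\rfloor$ irreducible components.
   Context: Let $F$ be an algebraically closed field. For integers $1\le r\le m\le n$ and $k\ge 1$, let $S=F[x^{(l)}_{i,j}:1\le i\le m,\ 1\le j\le n,\ 0\le l\le k-1]$, the coordinate ring of $\mathbf A^{mnk}_F$, and let $X(t)$ be the $m\times n$ matrix over $S[t]/(t^k)$ with $(i,j)$ entry $x_{i,j}(t)=\sum_{l=0}^{k-1}x^{(l)}_{i,j}t^l$. $\mathcal I^{m,n}_{r,k}\subseteq S$ is the ideal generated by the coefficients of $t^l$, $0\le l\le k-1$, of all $r\times r$ minors of $X(t)$, and $\mathcal Z^{m,n}_{r,k}\subseteq\mathbf A^{mnk}_F$ is its zero set. *)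

theory Defs
  imports "HOL-Computational_Algebra.Polynomial" "Jordan_Normal_Form.Determinant"
begin

definition alg_closed :: "'a::field itself \<Rightarrow> bool" where
  "alg_closed _ \<longleftrightarrow> (\<forall>p::'a poly. degree p > 0 \<longrightarrow> (\<exists>x. poly p x = 0))"

text \<open>Polynomial functions on the affine space with coordinates indexed by the set V.
  Over an infinite field these are exactly the polynomials in the variables V.\<close>
inductive_set polyfun :: "'v set \<Rightarrow> (('v \<Rightarrow> 'a::comm_ring_1) \<Rightarrow> 'a) set" for V where
  pf_const: "(\<lambda>x. c) \<in> polyfun V"
| pf_var: "v \<in> V \<Longrightarrow> (\<lambda>x. x v) \<in> polyfun V"
| pf_add: "p \<in> polyfun V \<Longrightarrow> q \<in> polyfun V \<Longrightarrow> (\<lambda>x. p x + q x) \<in> polyfun V"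
| pf_mult: "p \<in> polyfun V \<Longrightarrow> q \<in> polyfun V \<Longrightarrow> (\<lambda>x. p x * q x) \<in> polyfun V"

definition affine_space :: "'v set \<Rightarrow> ('v \<Rightarrow> 'a::zero) set" where
  "affine_space V = {x. \<forall>v. v \<notin> V \<longrightarrow> x v = 0}"

definition zariski_closed :: "'v set \<Rightarrow> ('v \<Rightarrow> 'a::comm_ring_1) set \<Rightarrow> bool" where
  "zariski_closed V S \<longleftrightarrow>
     (\<exists>P \<subseteq> polyfun V. S = {x \<in> affine_space V. \<forall>p\<in>P. p x = 0})"

definition zariski_irreducible :: "'v set \<Rightarrow> ('v \<Rightarrow> 'a::comm_ring_1) set \<Rightarrow> bool" where
  "zariski_irreducible V S \<longleftrightarrow> zariski_closed V S \<and> S \<noteq> {} \<and>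
     (\<forall>A B. zariski_closed V A \<and> zariski_closed V B \<and> S = A \<union> B \<longrightarrow> S = A \<or> S = B)"

definition irreducible_components ::
  "'v set \<Rightarrow> ('v \<Rightarrow> 'a::comm_ring_1) set \<Rightarrow> ('v \<Rightarrow> 'a) set set" where
  "irreducible_components V Z =
     {C. C \<subseteq> Z \<and> zariski_irreducible V C \<and>
         (\<forall>D. D \<subseteq> Z \<and> zariski_irreducible V D \<and> C \<subseteq> D \<longrightarrow> D = C)}"

text \<open>Variables x^{(l)}_{i,j} indexed by (i,j,l) with 0 \<le> i < m, 0 \<le> j < n, 0 \<le> l < k
  (0-based indices).\<close>
definition jet_vars :: "nat \<Rightarrow> nat \<Rightarrow> nat \<Rightarrow> (nat \<times> nat \<times> nat) set" where
  "jet_vars m n k = {0..<m} \<times> {0..<n} \<times> {0..<k}"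

definition jet_entry :: "nat \<Rightarrow> (nat \<times> nat \<times> nat \<Rightarrow> 'a::comm_ring_1) \<Rightarrow> nat \<Rightarrow> nat \<Rightarrow> 'a poly" where
  "jet_entry k x i j = (\<Sum>l<k. monom (x (i, j, l)) l)"

definition jet_minor :: "nat \<Rightarrow> nat \<Rightarrow> (nat \<Rightarrow> nat) \<Rightarrow> (nat \<Rightarrow> nat)
     \<Rightarrow> (nat \<times> nat \<times> nat \<Rightarrow> 'a::comm_ring_1) \<Rightarrow> 'a poly" where
  "jet_minor k r f g x = det (mat r r (\<lambda>(a, b). jet_entry k x (f a) (g b)))"

text \<open>Z^{m,n}_{r,k}: the common zeros of the coefficients of t^l (l < k) of all r\<times>r minors
  of X(t), i.e. the zero set of the ideal I^{m,n}_{r,k} (evaluation commutes with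
  determinants and with the quotient S[t] \<rightarrow> S[t]/(t^k)).\<close>
definition jet_det_variety :: "nat \<Rightarrow> nat \<Rightarrow> nat \<Rightarrow> nat \<Rightarrow> (nat \<times> nat \<times> nat \<Rightarrow> 'a::comm_ring_1) set" where
  "jet_det_variety m n r k =
     {x \<in> affine_space (jet_vars m n k).
        \<forall>f g. strict_mono_on {0..<r} f \<and> f ` {0..<r} \<subseteq> {0..<m} \<and>
              strict_mono_on {0..<r} g \<and> g ` {0..<r} \<subseteq> {0..<n} \<longrightarrow>
              (\<forall>l<k. coeff (jet_minor k r f g x) l = 0)}"

end

theory Submission
  imports Defs
begin

section \<open>Polynomial functions\<close>

lemma polyfun_sum:
  assumes "finite S" "\<And>i. i \<in> S \<Longrightarrow> f i \<in> polyfun V"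
  shows "(\<lambda>x. \<Sum>i\<in>S. f i x) \<in> polyfun V"
  using assms
proof (induction S rule: finite_induct)
  case empty
  then show ?case using polyfun.pf_const[of 0 V] by simp
next
  case (insert a S)
  then show ?case using polyfun.pf_add[of "f a" V "\<lambda>x. \<Sum>i\<in>S. f i x"] by simp
qed

lemma polyfun_prod:
  assumes "finite S" "\<And>i. i \<in> S \<Longrightarrow> f i \<in> polyfun V"
  shows "(\<lambda>x. \<Prod>i\<in>S. f i x) \<in> polyfun V"
  using assms
proof (induction S rule: finite_induct)
  case empty
  then show ?case using polyfun.pf_const[of 1 V] by simp
next
  case (insert a S)
  then show ?case using polyfun.pf_mult[of "f a" V "\<lambda>x. \<Prod>i\<in>S. f i x"] by simp
qed

lemma polyfun_mono: "p \<in> polyfun V \<Longrightarrow> V \<subseteq> W \<Longrightarrow> p \<in> polyfun W"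
  by (induction p rule: polyfun.induct) (auto intro: polyfun.intros)

lemma polyfun_compose:
  assumes "p \<in> polyfun V" "\<And>v. v \<in> V \<Longrightarrow> (\<lambda>y. \<phi> y v) \<in> polyfun W"
  shows "(\<lambda>y. p (\<phi> y)) \<in> polyfun W"
  using assms
  by (induction p rule: polyfun.induct) (auto intro: polyfun.intros)

lemma polyfun_indep:
  assumes "p \<in> polyfun V" "v \<notin> V"
  shows "p (y(v := s)) = p y"
  using assms by (induction p rule: polyfun.induct) auto

lemma polyfun_empty_const:
  assumes "p \<in> polyfun {}"
  shows "p y = p z"
  using assms by (induction p rule: polyfun.induct) auto

definition pp :: "'v set \<Rightarrow> (('v \<Rightarrow> 'a::comm_ring_1) \<Rightarrow> 'a poly) set" where
  "pp V = {P. \<forall>l. (\<lambda>x. coeff (P x) l) \<in> polyfun V}"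

lemma pp_const: "(\<lambda>x. c) \<in> pp V"
  unfolding pp_def using polyfun.pf_const by auto

lemma pp_monom: "v \<in> V \<Longrightarrow> (\<lambda>x. monom (x v) l) \<in> pp V"
  unfolding pp_def
proof safe
  fix l' assume "v \<in> V"
  show "(\<lambda>x. coeff (monom (x v) l) l') \<in> polyfun V"
  proof (cases "l = l'")
    case True
    then show ?thesis using polyfun.pf_var[OF \<open>v \<in> V\<close>] by simp
  next
    case False
    then show ?thesis using polyfun.pf_const[of 0 V] by simp
  qed
qed

lemma pp_add: "P \<in> pp V \<Longrightarrow> Q \<in> pp V \<Longrightarrow> (\<lambda>x. P x + Q x) \<in> pp V"
  unfolding pp_def
proof safe
  fix l assume P: "\<forall>l. (\<lambda>x. coeff (P x) l) \<in> polyfun V" and Q: "\<forall>l. (\<lambda>x. coeff (Q x) l) \<in> polyfun V"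
  show "(\<lambda>x. coeff (P x + Q x) l) \<in> polyfun V"
    using polyfun.pf_add[OF P[rule_format] Q[rule_format]] by simp
qed

lemma pp_mult: "P \<in> pp V \<Longrightarrow> Q \<in> pp V \<Longrightarrow> (\<lambda>x. P x * Q x) \<in> pp V"
  unfolding pp_def
proof safe
  fix l assume P: "\<forall>l. (\<lambda>x. coeff (P x) l) \<in> polyfun V" and Q: "\<forall>l. (\<lambda>x. coeff (Q x) l) \<in> polyfun V"
  have "(\<lambda>x. \<Sum>i\<le>l. coeff (P x) i * coeff (Q x) (l - i)) \<in> polyfun V"
    by (rule polyfun_sum) (auto intro: polyfun.pf_mult P[rule_format] Q[rule_format])
  then show "(\<lambda>x. coeff (P x * Q x) l) \<in> polyfun V" by (simp add: coeff_mult)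
qed

lemma pp_sum:
  assumes "finite S" "\<And>i. i \<in> S \<Longrightarrow> P i \<in> pp V"
  shows "(\<lambda>x. \<Sum>i\<in>S. P i x) \<in> pp V"
  using assms
proof (induction S rule: finite_induct)
  case empty
  then show ?case using pp_const[of 0 V] by simp
next
  case (insert a S)
  then show ?case using pp_add[of "P a" V "\<lambda>x. \<Sum>i\<in>S. P i x"] by simp
qed

lemma pp_prod:
  assumes "finite S" "\<And>i. i \<in> S \<Longrightarrow> P i \<in> pp V"
  shows "(\<lambda>x. \<Prod>i\<in>S. P i x) \<in> pp V"
  using assms
proof (induction S rule: finite_induct)
  case empty
  then show ?case using pp_const[of 1 V] by simp
next
  case (insert a S)
  then show ?case using pp_mult[of "P a" V "\<lambda>x. \<Prod>i\<in>S. P i x"] by simp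
qed

lemma pp_coeff: "P \<in> pp V \<Longrightarrow> (\<lambda>x. coeff (P x) l) \<in> polyfun V"
  unfolding pp_def by auto

lemma pp_det:
  assumes "\<And>a b. a < s \<Longrightarrow> b < s \<Longrightarrow> (\<lambda>x. M x a b) \<in> pp V"
  shows "(\<lambda>x. det (mat s s (\<lambda>(a,b). M x a b))) \<in> pp V"
proof -
  have "(\<lambda>x. \<Sum>p\<in>{p. p permutes {0..<s}}. signof p * (\<Prod>i = 0..<s. M x i (p i))) \<in> pp V"
  proof (rule pp_sum)
    show "finite {p. p permutes {0..<s}}" by (simp add: finite_permutations)
    fix p assume p: "p \<in> {p. p permutes {0..<s}}"
    have "(\<lambda>x. \<Prod>i = 0..<s. M x i (p i)) \<in> pp V"
      by (rule pp_prod) (use p assms permutes_in_image in auto)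
    then show "(\<lambda>x. signof p * (\<Prod>i = 0..<s. M x i (p i))) \<in> pp V"
      using pp_mult[OF pp_const] by blast
  qed
  moreover have "det (mat s s (\<lambda>(a,b). M x a b)) = (\<Sum>p\<in>{p. p permutes {0..<s}}. signof p * (\<Prod>i = 0..<s. M x i (p i)))" for x
    by (subst det_def') (auto intro!: sum.cong prod.cong simp: permutes_in_image)
  ultimately show ?thesis by simp
qed

section \<open>Univariate decomposition and integral domain property\<close>

lemma polyfun_univ:
  assumes "p \<in> polyfun (insert v W)"
  shows "\<exists>P \<in> pp W. \<forall>y. p y = poly (P y) (y v)"
  using assms
proof (induction p rule: polyfun.induct)
  case (pf_const c)
  show ?case by (rule bexI[of _ "\<lambda>y. [:c:]"]) (auto intro: pp_const)
next
  case (pf_var w)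
  show ?case
  proof (cases "w = v")
    case True
    show ?thesis by (rule bexI[of _ "\<lambda>y. [:0,1:]"]) (auto simp: True intro: pp_const)
  next
    case False
    then have "w \<in> W" using pf_var by auto
    show ?thesis by (rule bexI[of _ "\<lambda>y. monom (y w) 0"]) (auto intro: pp_monom[OF \<open>w \<in> W\<close>] simp: poly_monom)
  qed
next
  case (pf_add p q)
  then obtain P Q where "P \<in> pp W" "Q \<in> pp W" "\<forall>y. p y = poly (P y) (y v)" "\<forall>y. q y = poly (Q y) (y v)" by blast
  then show ?case by (intro bexI[of _ "\<lambda>y. P y + Q y"]) (auto intro: pp_add)
next
  case (pf_mult p q)
  then obtain P Q where "P \<in> pp W" "Q \<in> pp W" "\<forall>y. p y = poly (P y) (y v)" "\<forall>y. q y = poly (Q y) (y v)" by blast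
  then show ?case by (intro bexI[of _ "\<lambda>y. P y * Q y"]) (auto intro: pp_mult)
qed

lemma pp_indep:
  assumes "P \<in> pp W" "v \<notin> W"
  shows "P (y(v := s)) = P y"
proof (rule poly_eqI)
  fix l
  have "(\<lambda>x. coeff (P x) l) \<in> polyfun W" using assms pp_coeff by blast
  from polyfun_indep[OF this assms(2)] show "coeff (P (y(v := s))) l = coeff (P y) l" .
qed

lemma polyfun_domain:
  fixes p q :: "('v \<Rightarrow> 'a::field) \<Rightarrow> 'a"
  assumes inf: "infinite (UNIV :: 'a set)" and fin: "finite W"
  shows "p \<in> polyfun W \<Longrightarrow> q \<in> polyfun W \<Longrightarrow> p y1 \<noteq> 0 \<Longrightarrow> q y2 \<noteq> 0 \<Longrightarrow> \<exists>y. p y * q y \<noteq> 0"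
  using fin
proof (induction W arbitrary: p q y1 y2 rule: finite_induct)
  case empty
  then show ?case using polyfun_empty_const[of p] polyfun_empty_const[of q] by (metis mult_eq_0_iff)
next
  case (insert v W)
  obtain P where P: "P \<in> pp W" "\<forall>y. p y = poly (P y) (y v)" using polyfun_univ[OF insert.prems(1)] by blast
  obtain Q where Q: "Q \<in> pp W" "\<forall>y. q y = poly (Q y) (y v)" using polyfun_univ[OF insert.prems(2)] by blast
  have "P y1 \<noteq> 0" using P insert.prems(3) by auto
  then obtain l1 where l1: "coeff (P y1) l1 \<noteq> 0" using poly_eqI[of "P y1" 0] by auto
  have "Q y2 \<noteq> 0" using Q insert.prems(4) by auto
  then obtain l2 where l2: "coeff (Q y2) l2 \<noteq> 0" using poly_eqI[of "Q y2" 0] by auto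
  obtain z where z: "coeff (P z) l1 * coeff (Q z) l2 \<noteq> 0"
    using insert.IH[OF pp_coeff[OF P(1)] pp_coeff[OF Q(1)] l1 l2] by blast
  then have "P z \<noteq> 0" "Q z \<noteq> 0" by auto
  then have "P z * Q z \<noteq> 0" by simp
  then have "finite {s. poly (P z * Q z) s = 0}" by (rule poly_roots_finite)
  with inf obtain s where s: "poly (P z * Q z) s \<noteq> 0"
    by (metis (mono_tags, lifting) UNIV_I finite_subset mem_Collect_eq subsetI)
  define y where "y = z(v := s)"
  have "P y = P z" "Q y = Q z" unfolding y_def
    using pp_indep[OF P(1) insert.hyps(2)] pp_indep[OF Q(1) insert.hyps(2)] by auto
  then have "p y * q y = poly (P z * Q z) s" using P Q by (simp add: y_def)
  with s show ?case by (metis poly_mult)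
qed

lemma alg_closed_infinite:
  assumes "alg_closed TYPE('a::field)"
  shows "infinite (UNIV :: 'a set)"
proof
  assume fin: "finite (UNIV :: 'a set)"
  define q :: "'a poly" where "q = (\<Prod>a\<in>UNIV. [:-a, 1:])"
  have dq: "degree q = card (UNIV :: 'a set)"
    unfolding q_def by (subst degree_prod_eq_sum_degree) (auto simp: fin)
  have "card (UNIV :: 'a set) > 0" using fin by (simp add: card_gt_0_iff)
  then have d: "degree (q + 1) > 0" using dq by (simp add: degree_add_eq_left)
  then obtain x where "poly (q + 1) x = 0" using assms unfolding alg_closed_def by blast
  moreover have "poly q x = 0" unfolding q_def poly_prod using fin
    by (subst prod_zero_iff) auto
  ultimately show False by simp
qed

definition zcl :: "'v set \<Rightarrow> ('v \<Rightarrow> 'a::comm_ring_1) set \<Rightarrow> ('v \<Rightarrow> 'a) set" where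
  "zcl V S = {x \<in> affine_space V. \<forall>p\<in>polyfun V. (\<forall>s\<in>S. p s = 0) \<longrightarrow> p x = 0}"

lemma zcl_closed: "zariski_closed V (zcl V S)"
  unfolding zariski_closed_def zcl_def
  by (rule exI[of _ "{p \<in> polyfun V. \<forall>s\<in>S. p s = 0}"]) auto

lemma zcl_sep: "g \<in> polyfun V \<Longrightarrow> (\<forall>s\<in>S. g s = 0) \<Longrightarrow> g x \<noteq> 0 \<Longrightarrow> x \<notin> zcl V S"
  unfolding zcl_def by auto

lemma zcl_mem: "x \<in> zcl V S \<Longrightarrow> p \<in> polyfun V \<Longrightarrow> (\<forall>s\<in>S. p s = 0) \<Longrightarrow> p x = 0"
  unfolding zcl_def by blast

lemma vs_in: "A = {x \<in> affine_space V. \<forall>p\<in>PA. p x = 0} \<Longrightarrow> x \<in> A \<Longrightarrow> p \<in> PA \<Longrightarrow> p x = 0"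
  by blast

lemma vs_notin: "x \<in> affine_space V \<Longrightarrow> x \<notin> {x \<in> affine_space V. \<forall>p\<in>PA. p x = 0} \<Longrightarrow> \<exists>p\<in>PA. p x \<noteq> 0"
  by blast

lemma component_crit:
  fixes \<phi> :: "('u \<Rightarrow> 'a) \<Rightarrow> ('v \<Rightarrow> 'a::field)"
  assumes inf: "infinite (UNIV :: 'a set)" and finW: "finite W"
    and Zc: "zariski_closed V Z"
    and phi_aff: "\<And>y. \<phi> y \<in> affine_space V"
    and phi_Z: "\<And>y. \<phi> y \<in> Z"
    and phi_pf: "\<And>v. v \<in> V \<Longrightarrow> (\<lambda>y. \<phi> y v) \<in> polyfun W"
    and f: "f \<in> polyfun V" and y0: "f (\<phi> y0) \<noteq> 0"
    and opn: "\<And>x. x \<in> Z \<Longrightarrow> f x \<noteq> 0 \<Longrightarrow> x \<in> range \<phi>"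
  shows "zcl V (range \<phi>) \<in> irreducible_components V Z"
proof -
  define C where "C = zcl V (range \<phi>)"
  define P where "P = {p \<in> polyfun V. \<forall>s\<in>range \<phi>. p s = 0}"
  have C_eq: "C = {x \<in> affine_space V. \<forall>p\<in>P. p x = 0}" unfolding C_def zcl_def P_def by auto
  have rC: "range \<phi> \<subseteq> C" unfolding C_def zcl_def using phi_aff by auto
  obtain PZ where PZ: "PZ \<subseteq> polyfun V" "Z = {x \<in> affine_space V. \<forall>p\<in>PZ. p x = 0}"
    using Zc unfolding zariski_closed_def by blast
  have CZ: "C \<subseteq> Z"
  proof
    fix x assume x: "x \<in> C"
    show "x \<in> Z" unfolding PZ(2)
    proof safe
      show "x \<in> affine_space V" using x C_eq by auto
      fix p assume p: "p \<in> PZ"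
      have "\<forall>s\<in>range \<phi>. p s = 0" using phi_Z p PZ by auto
      then show "p x = 0" using x p PZ(1) unfolding C_def zcl_def by auto
    qed
  qed
  have closedC: "zariski_closed V C" unfolding C_def by (rule zcl_closed)
  have irrC: "zariski_irreducible V C"
    unfolding zariski_irreducible_def
  proof (intro conjI allI impI)
    show "zariski_closed V C" by (rule closedC)
    show "C \<noteq> {}" using rC by auto
    fix A B assume AB: "zariski_closed V A \<and> zariski_closed V B \<and> C = A \<union> B"
    show "C = A \<or> C = B"
    proof (rule ccontr)
      assume ne: "\<not> (C = A \<or> C = B)"
      obtain PA where PA: "PA \<subseteq> polyfun V" "A = {x \<in> affine_space V. \<forall>p\<in>PA. p x = 0}"
        using AB unfolding zariski_closed_def by blast
      obtain PB where PB: "PB \<subseteq> polyfun V" "B = {x \<in> affine_space V. \<forall>p\<in>PB. p x = 0}"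
        using AB unfolding zariski_closed_def by blast
      have CAB: "C = A \<union> B" using AB by (rule conjunct2[THEN conjunct2])
      have AC: "A \<subseteq> C" "B \<subseteq> C" unfolding CAB by auto
      obtain xa where xa: "xa \<in> C" "xa \<notin> A" using ne AC(1) by blast
      have xaa: "xa \<in> affine_space V" using xa(1) unfolding C_eq by simp
      obtain pa where pa: "pa \<in> PA" "pa xa \<noteq> 0" using vs_notin[OF xaa xa(2)[unfolded PA(2)]] by blast
      obtain xb where xb: "xb \<in> C" "xb \<notin> B" using ne AC(2) by blast
      have xba: "xb \<in> affine_space V" using xb(1) unfolding C_eq by simp
      obtain pb where pb: "pb \<in> PB" "pb xb \<noteq> 0" using vs_notin[OF xba xb(2)[unfolded PB(2)]] by blast
      have paV: "pa \<in> polyfun V" using pa(1) PA(1) by (rule rev_subsetD)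
      have pbV: "pb \<in> polyfun V" using pb(1) PB(1) by (rule rev_subsetD)
      have "\<not> (\<forall>s\<in>range \<phi>. pa s = 0)" using zcl_mem[OF xa(1)[unfolded C_def] paV] pa(2) by blast
      then obtain y1 where y1: "pa (\<phi> y1) \<noteq> 0" by auto
      have "\<not> (\<forall>s\<in>range \<phi>. pb s = 0)" using zcl_mem[OF xb(1)[unfolded C_def] pbV] pb(2) by blast
      then obtain y2 where y2: "pb (\<phi> y2) \<noteq> 0" by auto
      have ca: "(\<lambda>y. pa (\<phi> y)) \<in> polyfun W" by (rule polyfun_compose[OF paV phi_pf])
      have cb: "(\<lambda>y. pb (\<phi> y)) \<in> polyfun W" by (rule polyfun_compose[OF pbV phi_pf])
      obtain y where y: "pa (\<phi> y) * pb (\<phi> y) \<noteq> 0"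
        using polyfun_domain[OF inf finW ca cb, of y1 y2] y1 y2 by auto
      have "\<phi> y \<in> C" using rC by auto
      then have "\<phi> y \<in> A \<or> \<phi> y \<in> B" using AB by simp
      then show False
      proof
        assume "\<phi> y \<in> A" then have "pa (\<phi> y) = 0" using vs_in[OF PA(2) _ pa(1)] by blast
        then show False using y by simp
      next
        assume "\<phi> y \<in> B" then have "pb (\<phi> y) = 0" using vs_in[OF PB(2) _ pb(1)] by blast
        then show False using y by simp
      qed
    qed
  qed
  have maxC: "D = C" if D: "D \<subseteq> Z" "zariski_irreducible V D" "C \<subseteq> D" for D
  proof -
    obtain PD where PD: "PD \<subseteq> polyfun V" "D = {x \<in> affine_space V. \<forall>p\<in>PD. p x = 0}"
      using D(2) unfolding zariski_irreducible_def zariski_closed_def by blast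
    define A where "A = {x \<in> affine_space V. \<forall>p\<in>PD \<union> {f}. p x = 0}"
    define B where "B = {x \<in> affine_space V. \<forall>p\<in>PD \<union> P. p x = 0}"
    have cA: "zariski_closed V A" unfolding zariski_closed_def A_def using PD f by blast
    have cB: "zariski_closed V B" unfolding zariski_closed_def B_def using PD P_def by blast
    have "D = A \<union> B"
    proof
      show "D \<subseteq> A \<union> B"
      proof
        fix x assume x: "x \<in> D"
        show "x \<in> A \<union> B"
        proof (cases "f x = 0")
          case True then show ?thesis using x PD unfolding A_def by auto
        next
          case False
          then have "x \<in> range \<phi>" using opn x D(1) by auto
          then have "x \<in> C" using rC by auto
          then show ?thesis using x PD unfolding B_def C_eq by auto
        qed
      qed
      show "A \<union> B \<subseteq> D" unfolding A_def B_def PD(2) by auto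
    qed
    moreover have irrD: "\<forall>A B. zariski_closed V A \<and> zariski_closed V B \<and> D = A \<union> B \<longrightarrow> D = A \<or> D = B"
      using D(2) unfolding zariski_irreducible_def by blast
    ultimately have "D = A \<or> D = B" using cA cB by blast
    then show "D = C"
    proof
      assume "D = A"
      then have "\<phi> y0 \<in> A" using rC D(3) by auto
      then show ?thesis using y0 unfolding A_def by auto
    next
      assume "D = B"
      then have "D \<subseteq> C" unfolding B_def C_eq by auto
      then show ?thesis using D(3) by auto
    qed
  qed
  show ?thesis
    unfolding irreducible_components_def C_def[symmetric] mem_Collect_eq
    using CZ irrC maxC by blast
qed

section \<open>Divisibility by powers of t\<close>

lemma tdvd_coeff: "monom 1 e dvd P \<Longrightarrow> l < e \<Longrightarrow> coeff P l = 0"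
  by (simp add: monom_1_dvd_iff')

lemma tdvd_mono: "e' \<le> e \<Longrightarrow> monom 1 e dvd (P::'a::comm_ring_1 poly) \<Longrightarrow> monom 1 e' dvd P"
  by (simp add: monom_1_dvd_iff')

lemma tdvd_mult_monom:
  fixes X :: "'a::idom poly"
  assumes "monom 1 (a + b) dvd monom 1 a * X"
  shows "monom 1 b dvd X"
proof -
  have "monom 1 a * monom 1 b dvd monom 1 a * X" using assms by (simp add: mult_monom)
  then show ?thesis by (subst (asm) dvd_mult_cancel_left) (auto simp: monom_eq_0_iff)
qed

lemma unit_inverse:
  fixes P :: "'a::field poly"
  assumes "coeff P 0 \<noteq> 0"
  shows "\<exists>w. monom 1 N dvd (w * P - 1)"
proof (induction N)
  case 0
  then show ?case by (auto simp: monom_1_dvd_iff')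
next
  case (Suc N)
  then obtain w R where wR: "w * P - 1 = monom 1 N * R" by (auto elim!: dvdE)
  define c where "c = coeff R 0 / coeff P 0"
  have "coeff (R - smult c P) 0 = 0" using assms by (simp add: c_def)
  then have "monom 1 1 dvd (R - smult c P)" by (simp add: monom_1_dvd_iff')
  then obtain S where S: "R - smult c P = monom 1 1 * S" by (auto elim!: dvdE)
  have "(w - monom c N) * P - 1 = monom 1 N * (R - smult c P)"
    using wR by (simp add: algebra_simps monom_altdef)
  also have "\<dots> = monom 1 (Suc N) * S" using S by (simp add: mult_monom flip: mult.assoc)
  finally have "monom 1 (Suc N) dvd (w - monom c N) * P - 1" by (simp add: dvd_def)
  then show ?case by blast
qed

lemma tdvd_cancel_unit:
  fixes d M :: "'a::field poly"
  assumes "coeff d 0 \<noteq> 0" "monom 1 e dvd d * M"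
  shows "monom 1 e dvd M"
proof -
  obtain w where w: "monom 1 e dvd (w * d - 1)" using unit_inverse[OF assms(1)] by blast
  have "monom 1 e dvd w * (d * M)" using assms(2) by simp
  moreover have "monom 1 e dvd (w * d - 1) * M" using w by simp
  ultimately have "monom 1 e dvd w * (d * M) - (w * d - 1) * M" by (rule dvd_diff)
  then show ?thesis by (simp add: algebra_simps)
qed

definition ptrunc :: "nat \<Rightarrow> 'a::comm_ring_1 poly \<Rightarrow> 'a poly" where
  "ptrunc k P = (\<Sum>l<k. monom (coeff P l) l)"

lemma coeff_sum_monom: "coeff (\<Sum>l<k. monom (f l) l) j = (if j < k then f j else 0)"
  by (simp add: coeff_sum)

lemma coeff_ptrunc: "coeff (ptrunc k P) j = (if j < k then coeff P j else 0)"
  unfolding ptrunc_def by (simp add: coeff_sum_monom)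

lemma ptrunc_dvd: "monom 1 k dvd (P - ptrunc k P)"
  by (simp add: monom_1_dvd_iff' coeff_ptrunc)

lemma ptrunc_cong: "monom 1 k dvd (P - Q) \<Longrightarrow> ptrunc k P = ptrunc k Q"
  by (rule poly_eqI) (auto simp: coeff_ptrunc monom_1_dvd_iff')

lemma ptrunc_id: "degree P < k \<Longrightarrow> ptrunc k P = P"
  by (rule poly_eqI) (auto simp: coeff_ptrunc coeff_eq_0)

lemma jet_entry_coeff: "coeff (jet_entry k x i j) l = (if l < k then x (i, j, l) else 0)"
  unfolding jet_entry_def by (simp add: coeff_sum_monom)

section \<open>Cauchy--Binet style divisibility bound\<close>

lemma cb_expand:
  fixes L R :: "nat \<Rightarrow> nat \<Rightarrow> 'a::comm_ring_1"
  shows "det (mat s s (\<lambda>(i,j). \<Sum>c<N. L i c * R c j)) =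
    (\<Sum>\<sigma>\<in>Pi\<^sub>E {0..<s} (\<lambda>_. {0..<N}). (\<Prod>i\<in>{0..<s}. L i (\<sigma> i)) * det (mat s s (\<lambda>(i,j). R (\<sigma> i) j)))"
proof -
  let ?P = "{p. p permutes {0..<s}}"
  let ?S = "Pi\<^sub>E {0..<s} (\<lambda>_. {0..<N})"
  have "det (mat s s (\<lambda>(i,j). \<Sum>c<N. L i c * R c j)) =
        (\<Sum>p\<in>?P. signof p * (\<Prod>i\<in>{0..<s}. \<Sum>c\<in>{0..<N}. L i c * R c (p i)))"
    by (subst det_def'[of _ s]) (auto intro!: sum.cong prod.cong simp: permutes_in_image lessThan_atLeast0)
  also have "\<dots> = (\<Sum>p\<in>?P. signof p * (\<Sum>\<sigma>\<in>?S. \<Prod>i\<in>{0..<s}. L i (\<sigma> i) * R (\<sigma> i) (p i)))"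
    by (subst prod_sum_PiE) auto
  also have "\<dots> = (\<Sum>p\<in>?P. \<Sum>\<sigma>\<in>?S. (\<Prod>i\<in>{0..<s}. L i (\<sigma> i)) * (signof p * (\<Prod>i\<in>{0..<s}. R (\<sigma> i) (p i))))"
    by (simp add: sum_distrib_left prod.distrib algebra_simps)
  also have "\<dots> = (\<Sum>\<sigma>\<in>?S. \<Sum>p\<in>?P. (\<Prod>i\<in>{0..<s}. L i (\<sigma> i)) * (signof p * (\<Prod>i\<in>{0..<s}. R (\<sigma> i) (p i))))"
    by (rule sum.swap)
  also have "\<dots> = (\<Sum>\<sigma>\<in>?S. (\<Prod>i\<in>{0..<s}. L i (\<sigma> i)) * det (mat s s (\<lambda>(i,j). R (\<sigma> i) j)))"
  proof (rule sum.cong[OF refl])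
    fix \<sigma> assume "\<sigma> \<in> ?S"
    have "det (mat s s (\<lambda>(i,j). R (\<sigma> i) j)) = (\<Sum>p\<in>?P. signof p * (\<Prod>i\<in>{0..<s}. R (\<sigma> i) (p i)))"
      by (subst det_def'[of _ s]) (auto intro!: sum.cong prod.cong simp: permutes_in_image)
    then show "(\<Sum>p\<in>?P. (\<Prod>i\<in>{0..<s}. L i (\<sigma> i)) * (signof p * (\<Prod>i\<in>{0..<s}. R (\<sigma> i) (p i)))) =
      (\<Prod>i\<in>{0..<s}. L i (\<sigma> i)) * det (mat s s (\<lambda>(i,j). R (\<sigma> i) j))"
      by (simp add: sum_distrib_left)
  qed
  finally show ?thesis .
qed

lemma cb_lite:
  fixes L R :: "nat \<Rightarrow> nat \<Rightarrow> 'a::comm_ring_1" and z :: 'a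
  assumes Ldvd: "\<And>i c. i < s \<Longrightarrow> c < N \<Longrightarrow> z ^ e c dvd L i c"
    and bound: "\<And>\<sigma>. \<sigma> \<in> {0..<s} \<rightarrow> {0..<N} \<Longrightarrow> inj_on \<sigma> {0..<s} \<Longrightarrow> \<mu> \<le> (\<Sum>i\<in>{0..<s}. e (\<sigma> i))"
  shows "z ^ \<mu> dvd det (mat s s (\<lambda>(i,j). \<Sum>c<N. L i c * R c j))"
  unfolding cb_expand
proof (rule dvd_sum)
  fix \<sigma> assume \<sigma>: "\<sigma> \<in> Pi\<^sub>E {0..<s} (\<lambda>_. {0..<N})"
  show "z ^ \<mu> dvd (\<Prod>i\<in>{0..<s}. L i (\<sigma> i)) * det (mat s s (\<lambda>(i,j). R (\<sigma> i) j))"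
  proof (cases "inj_on \<sigma> {0..<s}")
    case True
    have "z ^ \<mu> dvd z ^ (\<Sum>i\<in>{0..<s}. e (\<sigma> i))"
      using bound[of \<sigma>] \<sigma> True by (intro le_imp_power_dvd) (auto simp: PiE_def)
    also have "\<dots> = (\<Prod>i\<in>{0..<s}. z ^ e (\<sigma> i))" by (rule power_sum)
    also have "\<dots> dvd (\<Prod>i\<in>{0..<s}. L i (\<sigma> i))"
      by (rule prod_dvd_prod) (use \<sigma> Ldvd in \<open>auto simp: PiE_def Pi_def\<close>)
    finally show ?thesis by simp
  next
    case False
    then obtain i i' where ii: "i \<in> {0..<s}" "i' \<in> {0..<s}" "i \<noteq> i'" "\<sigma> i = \<sigma> i'"
      unfolding inj_on_def by blast
    have "det (mat s s (\<lambda>(i,j). R (\<sigma> i) j)) = 0"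
      by (rule det_identical_rows[of _ s i i']) (use ii in \<open>auto intro!: eq_vecI\<close>)
    then show ?thesis by simp
  qed
qed

lemma sum_lessThan_add: "(\<Sum>c<a+(b::nat). f c) = (\<Sum>c<a. f c) + (\<Sum>c<b. f (a + c))"
proof (induction b)
  case 0 then show ?case by simp
next
  case (Suc b) then show ?case by (simp add: add.assoc)
qed

lemma sum_if_card: "finite S \<Longrightarrow> (\<Sum>i\<in>S. if P i then (c::nat) else 0) = c * card {i\<in>S. P i}"
  by (simp add: sum.If_cases Int_def conj_commute)

lemma count_bound:
  fixes \<sigma> :: "nat \<Rightarrow> nat"
  assumes inj: "inj_on \<sigma> {0..<s}" and s: "s = p + q" and q: "1 \<le> q" and jk: "2 * j \<le> k"
  shows "j + (q - 1) * (k - j) \<le> (\<Sum>i\<in>{0..<s}. (if \<sigma> i < p then 0 else if \<sigma> i = p then j else k - j))"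
proof -
  define IA where "IA = {i\<in>{0..<s}. \<sigma> i < p}"
  define IC where "IC = {i\<in>{0..<s}. \<sigma> i = p}"
  define IU where "IU = {i\<in>{0..<s}. p < \<sigma> i}"
  have cA: "card IA \<le> p"
  proof -
    have "card IA = card (\<sigma> ` IA)" using inj unfolding IA_def by (intro card_image[symmetric]) (auto intro: inj_on_subset)
    also have "\<dots> \<le> card {..<p}" by (rule card_mono) (auto simp: IA_def)
    finally show ?thesis by simp
  qed
  have cC: "card IC \<le> 1"
  proof -
    have "card IC = card (\<sigma> ` IC)" using inj unfolding IC_def by (intro card_image[symmetric]) (auto intro: inj_on_subset)
    also have "\<dots> \<le> card {p}" by (rule card_mono) (auto simp: IC_def)
    finally show ?thesis by simp
  qed
  have part: "card IA + card IC + card IU = s"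
  proof -
    have "IA \<union> IC \<union> IU = {0..<s}" unfolding IA_def IC_def IU_def by auto
    moreover have "card (IA \<union> IC \<union> IU) = card IA + card IC + card IU"
      by (subst card_Un_disjoint, simp add: IA_def IC_def, simp add: IU_def, auto simp: IA_def IC_def IU_def)
        (subst card_Un_disjoint, auto simp: IA_def IC_def)
    ultimately show ?thesis by simp
  qed
  have "(\<Sum>i\<in>{0..<s}. (if \<sigma> i < p then 0 else if \<sigma> i = p then j else k - j)) =
        (\<Sum>i\<in>{0..<s}. (if \<sigma> i = p then j else 0)) + (\<Sum>i\<in>{0..<s}. (if p < \<sigma> i then k - j else 0))"
    by (subst sum.distrib[symmetric]) (rule sum.cong, auto)
  also have "\<dots> = j * card IC + (k - j) * card IU"
    unfolding IC_def IU_def by (simp add: sum_if_card)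
  finally have eq: "(\<Sum>i\<in>{0..<s}. (if \<sigma> i < p then 0 else if \<sigma> i = p then j else k - j)) = j * card IC + (k - j) * card IU" .
  show ?thesis
  proof (cases "card IC = 0")
    case True
    then have "card IU \<ge> q" using part cA s by linarith
    then have "(k - j) * q \<le> (k - j) * card IU" by (rule mult_le_mono2)
    moreover have "j + (q - 1) * (k - j) \<le> (k - j) * q"
    proof -
      have "(k - j) * q = (k - j) + (q - 1) * (k - j)" using q by (cases q) auto
      then show ?thesis using jk by simp
    qed
    ultimately show ?thesis using eq True by linarith
  next
    case False
    then have C1: "card IC = 1" using cC by simp
    then have "card IU \<ge> q - 1" using part cA s by linarith
    then have "(k - j) * (q - 1) \<le> (k - j) * card IU" by (rule mult_le_mono2)
    then show ?thesis using eq C1 by (simp add: mult.commute)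
  qed
qed

lemma struct_minor_dvd:
  fixes A B E :: "nat \<Rightarrow> nat \<Rightarrow> 'a::comm_ring_1 poly" and C D :: "nat \<Rightarrow> 'a poly"
  assumes jk: "2 * j \<le> k" and q: "1 \<le> q"
  shows "monom 1 (j + (q - 1) * (k - j)) dvd
    det (mat (p + q) (p + q) (\<lambda>(i,jj). (\<Sum>c<p. A i c * B c jj) + monom 1 j * C i * D jj + monom 1 (k - j) * E i jj))"
proof -
  define s where "s = p + q"
  define N where "N = p + (1 + s)"
  define L where "L i c = (if c < p then A i c else if c = p then monom 1 j * C i
      else if c - (p + 1) = i then monom 1 (k - j) else 0)" for i c
  define R where "R c jj = (if c < p then B c jj else if c = p then D jj else E (c - (p + 1)) jj)" for c jj
  define e where "e c = (if c < p then 0 else if c = p then j else k - j)" for c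
  have sum_eq: "(\<Sum>c<N. L i c * R c jj) = (\<Sum>c<p. A i c * B c jj) + monom 1 j * C i * D jj + monom 1 (k - j) * E i jj"
    if i: "i < s" for i jj
  proof -
    have "(\<Sum>c<N. L i c * R c jj) = (\<Sum>c<p. L i c * R c jj) + (\<Sum>c<1 + s. L i (p + c) * R (p + c) jj)"
      unfolding N_def by (rule sum_lessThan_add)
    also have "(\<Sum>c<p. L i c * R c jj) = (\<Sum>c<p. A i c * B c jj)"
      by (rule sum.cong) (auto simp: L_def R_def)
    also have "(\<Sum>c<1 + s. L i (p + c) * R (p + c) jj) = L i p * R p jj + (\<Sum>c<s. L i (p + (1 + c)) * R (p + (1 + c)) jj)"
      by (subst sum_lessThan_add) simp
    also have "L i p * R p jj = monom 1 j * C i * D jj" by (simp add: L_def R_def)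
    also have "(\<Sum>c<s. L i (p + (1 + c)) * R (p + (1 + c)) jj) = (\<Sum>c<s. if c = i then monom 1 (k - j) * E i jj else 0)"
      by (rule sum.cong) (auto simp: L_def R_def)
    also have "\<dots> = monom 1 (k - j) * E i jj" using i by simp
    finally show ?thesis by (simp add: add.assoc)
  qed
  have "mat (p + q) (p + q) (\<lambda>(i,jj). (\<Sum>c<p. A i c * B c jj) + monom 1 j * C i * D jj + monom 1 (k - j) * E i jj)
      = mat s s (\<lambda>(i,jj). \<Sum>c<N. L i c * R c jj)"
    by (rule eq_matI) (auto simp: s_def sum_eq)
  moreover have "monom 1 1 ^ (j + (q - 1) * (k - j)) dvd det (mat s s (\<lambda>(i,jj). \<Sum>c<N. L i c * R c jj))"
  proof (rule cb_lite)
    fix i c assume "i < s" "c < N"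
    show "monom 1 1 ^ e c dvd L i c"
      by (auto simp: L_def e_def monom_power)
  next
    fix \<sigma> assume "\<sigma> \<in> {0..<s} \<rightarrow> {0..<N}" "inj_on \<sigma> {0..<s}"
    show "j + (q - 1) * (k - j) \<le> (\<Sum>i\<in>{0..<s}. e (\<sigma> i))"
      unfolding e_def by (rule count_bound[OF \<open>inj_on \<sigma> {0..<s}\<close> s_def q jk])
  qed
  ultimately show ?thesis by (simp add: monom_power)
qed

definition ext_idx :: "nat \<Rightarrow> (nat \<Rightarrow> nat) \<Rightarrow> nat \<Rightarrow> nat" where
  "ext_idx p F a = (if a < p then a else F (a - p))"

definition schur_Y :: "nat \<Rightarrow> (nat \<Rightarrow> nat \<Rightarrow> 'a::comm_ring_1) \<Rightarrow> nat \<Rightarrow> nat \<Rightarrow> 'a" where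
  "schur_Y p M a b = det (mat p p (\<lambda>(a,b). M a b)) * M a b -
     (\<Sum>c<p. \<Sum>c'<p. M a c * adj_mat (mat p p (\<lambda>(a,b). M a b)) $$ (c,c') * M c' b)"

lemma schur_det:
  fixes M :: "nat \<Rightarrow> nat \<Rightarrow> 'a::idom"
  assumes q: "1 \<le> q" and dz: "det (mat p p (\<lambda>(a,b). M a b)) \<noteq> 0"
  shows "det (mat p p (\<lambda>(a,b). M a b)) ^ (q - 1) *
      det (mat (p+q) (p+q) (\<lambda>(a,b). M (ext_idx p F a) (ext_idx p G b)))
    = det (mat q q (\<lambda>(i,j). schur_Y p M (F i) (G j)))"
proof -
  define P where "P = mat p p (\<lambda>(a,b). M a b)"
  define \<delta> where "\<delta> = det P"
  define aP where "aP = adj_mat P"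
  define B where "B = mat p q (\<lambda>(a,j). M a (G j))"
  define C where "C = mat q p (\<lambda>(i,b). M (F i) b)"
  define D where "D = mat q q (\<lambda>(i,j). M (F i) (G j))"
  have cP: "P \<in> carrier_mat p p" and caP: "aP \<in> carrier_mat p p" and cB: "B \<in> carrier_mat p q"
    and cC: "C \<in> carrier_mat q p" and cD: "D \<in> carrier_mat q q"
    unfolding P_def aP_def B_def C_def D_def using adj_mat(1)[of "mat p p (\<lambda>(a,b). M a b)" p] by auto
  have aPP: "aP * P = \<delta> \<cdot>\<^sub>m 1\<^sub>m p" unfolding aP_def \<delta>_def by (rule adj_mat(3)[OF cP])
  have X': "mat (p+q) (p+q) (\<lambda>(a,b). M (ext_idx p F a) (ext_idx p G b)) = four_block_mat P B C D"
    by (rule eq_matI) (auto simp: P_def B_def C_def D_def ext_idx_def)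
  define Lm where "Lm = four_block_mat (1\<^sub>m p) (0\<^sub>m p q) (- (C * aP)) (\<delta> \<cdot>\<^sub>m 1\<^sub>m q)"
  have cL: "Lm \<in> carrier_mat (p+q) (p+q)" unfolding Lm_def by simp
  have cX: "four_block_mat P B C D \<in> carrier_mat (p+q) (p+q)" using cP cD by simp
  have detL: "det Lm = \<delta> ^ q"
    unfolding Lm_def by (subst det_four_block_mat_upper_right_zero[of _ p _ q]) (use cC caP in auto)
  define Yq where "Yq = - (C * aP) * B + (\<delta> \<cdot>\<^sub>m 1\<^sub>m q) * D"
  have cY: "Yq \<in> carrier_mat q q" unfolding Yq_def using cC caP cB cD by auto
  have bl: "- (C * aP) * P + (\<delta> \<cdot>\<^sub>m 1\<^sub>m q) * C = 0\<^sub>m q p"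
  proof -
    have "- (C * aP) * P = - ((C * aP) * P)" by (rule uminus_mult_left_mat) (use cC caP cP in auto)
    also have "(C * aP) * P = C * (aP * P)" using cC caP cP by simp
    also have "\<dots> = \<delta> \<cdot>\<^sub>m C" unfolding aPP using cC
      by (simp add: mult_smult_distrib[OF cC one_carrier_mat] right_mult_one_mat[OF cC])
    finally have 1: "- (C * aP) * P = - (\<delta> \<cdot>\<^sub>m C)" .
    have 2: "(\<delta> \<cdot>\<^sub>m 1\<^sub>m q) * C = \<delta> \<cdot>\<^sub>m C" using cC
      by (simp add: mult_smult_assoc_mat[OF one_carrier_mat cC] left_mult_one_mat[OF cC])
    show ?thesis unfolding 1 2 using cC by simp
  qed
  have prod: "Lm * four_block_mat P B C D = four_block_mat P B (0\<^sub>m q p) Yq"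
  proof -
    have c1: "- (C * aP) \<in> carrier_mat q p" using cC caP by auto
    show ?thesis unfolding Lm_def
      by (subst mult_four_block_mat[OF one_carrier_mat zero_carrier_mat c1 smult_carrier_mat[OF one_carrier_mat] cP cB cC cD])
        (use cP cB cC cD caP bl in \<open>auto simp: Yq_def\<close>)
  qed
  have "\<delta> ^ q * det (four_block_mat P B C D) = det (Lm * four_block_mat P B C D)"
    using det_mult[OF cL cX] detL by simp
  also have "\<dots> = \<delta> * det Yq" unfolding prod \<delta>_def
    by (rule det_four_block_mat_lower_left_zero[OF cP cB refl cY])
  finally have eq: "\<delta> * (\<delta> ^ (q - 1) * det (four_block_mat P B C D)) = \<delta> * det Yq"
    using q by (cases q) auto
  have dz': "\<delta> \<noteq> 0" using dz unfolding \<delta>_def P_def .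
  have eq2: "\<delta> ^ (q - 1) * det (four_block_mat P B C D) = det Yq" using eq dz' by simp
  have Yq_eq: "Yq = mat q q (\<lambda>(i,j). schur_Y p M (F i) (G j))"
  proof (rule eq_matI)
    fix i j assume ij: "i < dim_row (mat q q (\<lambda>(i,j). schur_Y p M (F i) (G j)))"
      "j < dim_col (mat q q (\<lambda>(i,j). schur_Y p M (F i) (G j)))"
    then have i: "i < q" and j: "j < q" by auto
    have "Yq $$ (i,j) = - (\<Sum>c'<p. (\<Sum>c<p. M (F i) c * aP $$ (c, c')) * M c' (G j)) + \<delta> * M (F i) (G j)"
    proof -
      have dsum: "(\<Sum>ia = 0..<q. \<delta> * (if ia = i then 1 else 0) * M (F ia) (G j)) = \<delta> * M (F i) (G j)"
        by (subst sum.cong[OF refl, of _ _ "\<lambda>ia. if ia = i then \<delta> * M (F ia) (G j) else 0"]) (use i in auto)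
      show ?thesis
      unfolding Yq_def using i j cC caP cB cD dsum
      by (simp add: scalar_prod_def C_def B_def D_def lessThan_atLeast0 sum_negf)
    qed
    also have "\<dots> = schur_Y p M (F i) (G j)"
    proof -
      have sw: "(\<Sum>c'<p. (\<Sum>c<p. M (F i) c * aP $$ (c, c')) * M c' (G j)) =
          (\<Sum>c<p. \<Sum>c'<p. M (F i) c * aP $$ (c,c') * M c' (G j))"
        unfolding sum_distrib_right by (rule sum.swap)
      show ?thesis unfolding schur_Y_def \<delta>_def P_def using sw[unfolded aP_def P_def] by (simp add: aP_def P_def)
    qed
    finally show "Yq $$ (i,j) = mat q q (\<lambda>(i,j). schur_Y p M (F i) (G j)) $$ (i,j)" using i j by simp
  qed (use cY in auto)
  show ?thesis using eq2 unfolding X' Yq_eq \<delta>_def P_def .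
qed

lemma det2:
  fixes Y :: "nat \<Rightarrow> nat \<Rightarrow> 'a::idom"
  shows "det (mat 2 2 (\<lambda>(i,j). Y i j)) = Y 0 0 * Y 1 1 - Y 0 1 * Y 1 0"
proof -
  define A where "A = mat 1 1 (\<lambda>_. Y 0 0)"
  define B where "B = mat 1 1 (\<lambda>_. Y 0 1)"
  define C where "C = mat 1 1 (\<lambda>_. Y 1 0)"
  define D where "D = mat 1 1 (\<lambda>_. Y 1 1)"
  have e: "mat 2 2 (\<lambda>(i,j). Y i j) = four_block_mat A B C D"
  proof -
    have one: "\<And>i::nat. i < Suc (Suc 0) \<Longrightarrow> 0 < i \<Longrightarrow> i = Suc 0" by auto
    show ?thesis by (rule eq_matI) (auto simp: A_def B_def C_def D_def dest!: one)
  qed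
  have cm: "C * D = D * C"
    by (rule eq_matI) (auto simp: C_def D_def scalar_prod_def)
  have "det (four_block_mat A B C D) = det (A * D - B * C)"
    by (rule det_four_block_mat[OF _ _ _ _ cm]) (auto simp: A_def B_def C_def D_def)
  also have "\<dots> = (A * D - B * C) $$ (0,0)"
    by (rule det_single) (auto simp: A_def B_def C_def D_def)
  also have "\<dots> = Y 0 0 * Y 1 1 - Y 0 1 * Y 1 0"
    by (simp add: A_def B_def C_def D_def scalar_prod_def)
  finally show ?thesis using e by simp
qed

lemma det_diag:
  fixes d :: "nat \<Rightarrow> 'a::comm_ring_1"
  shows "det (mat s s (\<lambda>(i,j). if i = j then d i else 0)) = (\<Prod>i<s. d i)"
proof -
  have "det (mat s s (\<lambda>(i,j). if i = j then d i else 0)) = prod_list (diag_mat (mat s s (\<lambda>(i,j). if i = j then d i else 0)))"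
    by (rule det_upper_triangular) (auto simp: upper_triangular_def)
  also have "\<dots> = prod_list (map d [0..<s])"
    unfolding diag_mat_def by (intro arg_cong[where f=prod_list] map_cong) auto
  also have "\<dots> = (\<Prod>i<s. d i)" by (induction s) auto
  finally show ?thesis .
qed

lemma adj_row_sum:
  fixes M :: "nat \<Rightarrow> nat \<Rightarrow> 'a::comm_ring_1"
  assumes "a < p" "c' < p"
  shows "(\<Sum>c<p. M a c * adj_mat (mat p p (\<lambda>(a,b). M a b)) $$ (c,c')) =
    (if a = c' then det (mat p p (\<lambda>(a,b). M a b)) else 0)"
proof -
  define P where "P = mat p p (\<lambda>(a,b). M a b)"
  have cP: "P \<in> carrier_mat p p" unfolding P_def by simp
  have "(P * adj_mat P) $$ (a,c') = (det P \<cdot>\<^sub>m 1\<^sub>m p) $$ (a,c')" using adj_mat(2)[OF cP] by simp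
  moreover have "(P * adj_mat P) $$ (a,c') = (\<Sum>c<p. M a c * adj_mat P $$ (c,c'))"
    using assms adj_mat(1)[OF cP] by (simp add: scalar_prod_def P_def lessThan_atLeast0)
  ultimately show ?thesis using assms unfolding P_def by simp
qed

lemma adj_col_sum:
  fixes M :: "nat \<Rightarrow> nat \<Rightarrow> 'a::comm_ring_1"
  assumes "c < p" "b < p"
  shows "(\<Sum>c'<p. adj_mat (mat p p (\<lambda>(a,b). M a b)) $$ (c,c') * M c' b) =
    (if c = b then det (mat p p (\<lambda>(a,b). M a b)) else 0)"
proof -
  define P where "P = mat p p (\<lambda>(a,b). M a b)"
  have cP: "P \<in> carrier_mat p p" unfolding P_def by simp
  have "(adj_mat P * P) $$ (c,b) = (det P \<cdot>\<^sub>m 1\<^sub>m p) $$ (c,b)" using adj_mat(3)[OF cP] by simp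
  moreover have "(adj_mat P * P) $$ (c,b) = (\<Sum>c'<p. adj_mat P $$ (c,c') * M c' b)"
    using assms adj_mat(1)[OF cP] by (simp add: scalar_prod_def P_def lessThan_atLeast0)
  ultimately show ?thesis using assms unfolding P_def by simp
qed

lemma schur_Y_row0:
  fixes M :: "nat \<Rightarrow> nat \<Rightarrow> 'a::comm_ring_1"
  assumes "a < p"
  shows "schur_Y p M a b = 0"
proof -
  have "(\<Sum>c<p. \<Sum>c'<p. M a c * adj_mat (mat p p (\<lambda>(a,b). M a b)) $$ (c,c') * M c' b)
      = (\<Sum>c'<p. (\<Sum>c<p. M a c * adj_mat (mat p p (\<lambda>(a,b). M a b)) $$ (c,c')) * M c' b)"
    unfolding sum_distrib_right by (rule sum.swap)
  also have "\<dots> = (\<Sum>c'<p. (if a = c' then det (mat p p (\<lambda>(a,b). M a b)) else 0) * M c' b)"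
  proof (rule sum.cong[OF refl])
    fix x assume "x \<in> {..<p}"
    then show "(\<Sum>c<p. M a c * adj_mat (mat p p (\<lambda>(a,b). M a b)) $$ (c,x)) * M x b =
      (if a = x then det (mat p p (\<lambda>(a,b). M a b)) else 0) * M x b"
      using adj_row_sum[OF assms, of x M] by simp
  qed
  also have "\<dots> = det (mat p p (\<lambda>(a,b). M a b)) * M a b"
    by (subst sum.cong[OF refl, of _ _ "\<lambda>c'. if c' = a then det (mat p p (\<lambda>(a,b). M a b)) * M a b else 0"])
      (use assms in auto)
  finally show ?thesis unfolding schur_Y_def by simp
qed

lemma schur_Y_col0:
  fixes M :: "nat \<Rightarrow> nat \<Rightarrow> 'a::comm_ring_1"
  assumes "b < p"
  shows "schur_Y p M a b = 0"
proof -
  have "(\<Sum>c<p. \<Sum>c'<p. M a c * adj_mat (mat p p (\<lambda>(a,b). M a b)) $$ (c,c') * M c' b)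
      = (\<Sum>c<p. M a c * (\<Sum>c'<p. adj_mat (mat p p (\<lambda>(a,b). M a b)) $$ (c,c') * M c' b))"
    by (simp add: sum_distrib_left mult.assoc)
  also have "\<dots> = (\<Sum>c<p. M a c * (if c = b then det (mat p p (\<lambda>(a,b). M a b)) else 0))"
  proof (rule sum.cong[OF refl])
    fix x assume "x \<in> {..<p}"
    then show "M a x * (\<Sum>c'<p. adj_mat (mat p p (\<lambda>(a,b). M a b)) $$ (x,c') * M c' b) =
      M a x * (if x = b then det (mat p p (\<lambda>(a,b). M a b)) else 0)"
      using adj_col_sum[of x p b M] assms by simp
  qed
  also have "\<dots> = det (mat p p (\<lambda>(a,b). M a b)) * M a b"
    by (subst sum.cong[OF refl, of _ _ "\<lambda>c. if c = b then det (mat p p (\<lambda>(a,b). M a b)) * M a b else 0"])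
      (use assms in \<open>auto simp: mult.commute\<close>)
  finally show ?thesis unfolding schur_Y_def by simp
qed

lemma rank1:
  fixes Y :: "nat \<Rightarrow> nat \<Rightarrow> 'a::field poly"
  assumes dv: "\<And>a b. a \<in> I \<Longrightarrow> b \<in> J \<Longrightarrow> monom 1 e dvd Y a b"
    and u: "u \<in> I" and v: "v \<in> J" and uv: "coeff (Y u v) e \<noteq> 0"
    and m2: "\<And>a a' b b'. a \<in> I \<Longrightarrow> a' \<in> I \<Longrightarrow> b \<in> J \<Longrightarrow> b' \<in> J \<Longrightarrow>
      monom 1 k dvd (Y a b * Y a' b' - Y a b' * Y a' b)"
    and ek: "2 * e \<le> k"
  shows "\<exists>c d E. \<forall>a\<in>I. \<forall>b\<in>J. Y a b = monom 1 e * c a * d b + monom 1 (k - e) * E a b"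
proof -
  define Y' where "Y' a b = (SOME z. Y a b = monom 1 e * z)" for a b
  have Y': "Y a b = monom 1 e * Y' a b" if ab: "a \<in> I" "b \<in> J" for a b
  proof -
    obtain z where "Y a b = monom 1 e * z" using dv[OF ab] by (auto elim!: dvdE)
    then show ?thesis unfolding Y'_def by (rule someI)
  qed
  define \<nu> where "\<nu> = Y' u v"
  have \<nu>0: "coeff \<nu> 0 \<noteq> 0"
    using uv Y'[OF u v] coeff_monom_mult[of 1 e "Y' u v" e] by (simp add: \<nu>_def)
  obtain w where w: "monom 1 (k - 2 * e) dvd (w * \<nu> - 1)" using unit_inverse[OF \<nu>0] by blast
  have key: "monom 1 (k - 2 * e) dvd (\<nu> * Y' a b - Y' u b * Y' a v)" if a: "a \<in> I" and b: "b \<in> J" for a b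
  proof -
    have "monom 1 k dvd (Y u v * Y a b - Y u b * Y a v)" by (rule m2[OF u a v b])
    also have "Y u v * Y a b - Y u b * Y a v = monom 1 (2 * e) * (\<nu> * Y' a b - Y' u b * Y' a v)"
    proof -
      have mm2: "monom 1 (2 * e) = monom 1 e * (monom 1 e :: 'a poly)" by (simp add: mult_monom mult_2)
      show ?thesis using Y'[OF u v] Y'[OF a b] Y'[OF u b] Y'[OF a v] unfolding \<nu>_def mm2
        by (simp add: algebra_simps)
    qed
    finally have "monom 1 (2 * e + (k - 2 * e)) dvd monom 1 (2 * e) * (\<nu> * Y' a b - Y' u b * Y' a v)"
      using ek by simp
    then show ?thesis by (rule tdvd_mult_monom)
  qed
  define c where "c a = Y' a v" for a
  define d where "d b = w * Y' u b" for b
  have ex: "\<exists>z. Y' a b - c a * d b = monom 1 (k - 2 * e) * z" if ab: "a \<in> I" "b \<in> J" for a b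
  proof -
    have "monom 1 (k - 2 * e) dvd (w * (\<nu> * Y' a b - Y' u b * Y' a v) - (w * \<nu> - 1) * Y' a b)"
      using key[OF ab] w by (intro dvd_diff) auto
    also have "w * (\<nu> * Y' a b - Y' u b * Y' a v) - (w * \<nu> - 1) * Y' a b = Y' a b - c a * d b"
      unfolding c_def d_def by (simp add: algebra_simps)
    finally show ?thesis by (auto elim!: dvdE)
  qed
  define E where "E a b = (SOME z. Y' a b - c a * d b = monom 1 (k - 2 * e) * z)" for a b
  have "\<forall>a\<in>I. \<forall>b\<in>J. Y a b = monom 1 e * c a * d b + monom 1 (k - e) * E a b"
  proof (intro ballI)
    fix a b assume ab: "a \<in> I" "b \<in> J"
    have E: "Y' a b - c a * d b = monom 1 (k - 2 * e) * E a b"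
      unfolding E_def using ex[OF ab] by (rule someI_ex)
    have mm: "monom 1 e * monom 1 (k - 2 * e) = (monom 1 (k - e) :: 'a poly)"
      using ek by (simp add: mult_monom)
    have "Y a b = monom 1 e * (c a * d b + monom 1 (k - 2 * e) * E a b)"
      using Y'[OF ab] E by (simp add: algebra_simps)
    also have "\<dots> = monom 1 e * c a * d b + monom 1 (k - e) * E a b"
      by (simp only: distrib_left mult.assoc[symmetric] mm)
    finally show "Y a b = monom 1 e * c a * d b + monom 1 (k - e) * E a b" .
  qed
  then show ?thesis by blast
qed

lemma minor_struct:
  fixes A B E :: "nat \<Rightarrow> nat \<Rightarrow> 'a::comm_ring_1 poly" and C D :: "nat \<Rightarrow> 'a poly"
  assumes X: "\<And>i jj. i < p + q \<Longrightarrow> jj < p + q \<Longrightarrow>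
      Xe (F i) (G jj) = (\<Sum>c<p. A (F i) c * B c (G jj)) + monom 1 j * C (F i) * D (G jj) + monom 1 (k - j) * E (F i) (G jj)"
    and jk: "2 * j \<le> k" and q: "1 \<le> q"
  shows "monom 1 (j + (q - 1) * (k - j)) dvd det (mat (p + q) (p + q) (\<lambda>(a,b). Xe (F a) (G b)))"
proof -
  have "mat (p + q) (p + q) (\<lambda>(a,b). Xe (F a) (G b)) =
    mat (p + q) (p + q) (\<lambda>(i,jj). (\<Sum>c<p. (\<lambda>i c. A (F i) c) i c * (\<lambda>c jj. B c (G jj)) c jj)
        + monom 1 j * (\<lambda>i. C (F i)) i * (\<lambda>jj. D (G jj)) jj + monom 1 (k - j) * (\<lambda>i jj. E (F i) (G jj)) i jj)"
    by (rule eq_matI) (auto simp: X)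
  then show ?thesis using struct_minor_dvd[OF jk q, of p "\<lambda>i c. A (F i) c" "\<lambda>c jj. B c (G jj)"
      "\<lambda>i. C (F i)" "\<lambda>jj. D (G jj)" "\<lambda>i jj. E (F i) (G jj)"] by simp
qed

lemma ring_aux: "(X::'a::comm_ring_1) = S + m1 * E \<Longrightarrow> mk = m1 * mj \<Longrightarrow> X - mk * Q = S + m1 * (E - mj * Q)"
  by (simp add: algebra_simps)

lemma trunc_struct:
  fixes A B E :: "nat \<Rightarrow> nat \<Rightarrow> 'a::comm_ring_1 poly" and C D :: "nat \<Rightarrow> 'a poly"
  assumes "j \<le> k"
  shows "\<exists>E'. \<forall>a b. ptrunc k ((\<Sum>c<p. A a c * B c b) + monom 1 j * C a * D b + monom 1 (k - j) * E a b)
     = (\<Sum>c<p. A a c * B c b) + monom 1 j * C a * D b + monom 1 (k - j) * E' a b"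
proof -
  define S where "S a b = (\<Sum>c<p. A a c * B c b) + monom 1 j * C a * D b" for a b
  define Mf where "Mf a b = S a b + monom 1 (k - j) * E a b" for a b
  define Q where "Q a b = (SOME z. Mf a b - ptrunc k (Mf a b) = monom 1 k * z)" for a b
  have Q: "Mf a b - ptrunc k (Mf a b) = monom 1 k * Q a b" for a b
  proof -
    obtain z where "Mf a b - ptrunc k (Mf a b) = monom 1 k * z" using ptrunc_dvd[of k "Mf a b"] by (auto elim!: dvdE)
    then show ?thesis unfolding Q_def by (rule someI)
  qed
  have mm: "monom 1 k = monom 1 (k - j) * (monom 1 j :: 'a poly)"
    using assms by (simp add: mult_monom)
  have "ptrunc k (Mf a b) = S a b + monom 1 (k - j) * (E a b - monom 1 j * Q a b)" for a b
  proof -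
    have "ptrunc k (Mf a b) = Mf a b - monom 1 k * Q a b" using Q[of a b] by (simp add: algebra_simps)
    also have "\<dots> = S a b + monom 1 (k - j) * (E a b - monom 1 j * Q a b)"
      by (rule ring_aux[OF Mf_def mm])
    finally show ?thesis .
  qed
  then show ?thesis
    by (intro exI[of _ "\<lambda>a b. E a b - monom 1 j * Q a b"]) (simp add: Mf_def S_def)
qed

definition pcong :: "nat \<Rightarrow> 'a::comm_ring_1 poly \<Rightarrow> 'a poly \<Rightarrow> bool" where
  "pcong k a b \<longleftrightarrow> monom 1 k dvd (a - b)"

lemma pcong_refl[simp]: "pcong k a a" by (simp add: pcong_def)
lemma pcong_sym: "pcong k a b \<Longrightarrow> pcong k b a"
  unfolding pcong_def by (metis dvd_minus_iff minus_diff_eq)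
lemma pcong_trans: "pcong k a b \<Longrightarrow> pcong k b c \<Longrightarrow> pcong k a c"
  unfolding pcong_def using dvd_add by fastforce
lemma pcong_add: "pcong k a b \<Longrightarrow> pcong k c d \<Longrightarrow> pcong k (a + c) (b + d)"
  unfolding pcong_def by (metis add_diff_add dvd_add)
lemma pcong_mult: "pcong k a b \<Longrightarrow> pcong k c d \<Longrightarrow> pcong k (a * c) (b * d)"
proof -
  assume "pcong k a b" "pcong k c d"
  then have "monom 1 k dvd (a - b) * c + b * (c - d)" unfolding pcong_def by (intro dvd_add) auto
  then show ?thesis unfolding pcong_def by (simp add: algebra_simps)
qed
lemma pcong_sum: "(\<And>i. i \<in> S \<Longrightarrow> pcong k (f i) (g i)) \<Longrightarrow> pcong k (\<Sum>i\<in>S. f i) (\<Sum>i\<in>S. g i)"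
proof (induction S rule: infinite_finite_induct)
  case (insert x F)
  then show ?case by (simp add: pcong_add)
qed auto
lemma pcong_ptrunc: "pcong k (ptrunc k a) a"
  unfolding pcong_def using ptrunc_dvd[of k a] by (metis dvd_minus_iff minus_diff_eq)
lemma pcong_ptrunc_eq: "pcong k a b \<Longrightarrow> ptrunc k a = ptrunc k b"
  unfolding pcong_def by (rule ptrunc_cong)

definition Pp :: "nat \<Rightarrow> nat \<Rightarrow> (nat \<times> nat \<times> nat \<times> nat \<Rightarrow> 'a::comm_ring_1) \<Rightarrow> nat \<Rightarrow> nat \<Rightarrow> 'a poly" where
  "Pp k t y a b = (\<Sum>l<k. monom (y (t, a, b, l)) l)"

definition Mf :: "nat \<Rightarrow> nat \<Rightarrow> nat \<Rightarrow> (nat \<times> nat \<times> nat \<times> nat \<Rightarrow> 'a::comm_ring_1) \<Rightarrow> nat \<Rightarrow> nat \<Rightarrow> 'a poly" where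
  "Mf p k i y a b = (\<Sum>c<p. Pp k 0 y a c * Pp k 1 y c b) + monom 1 i * Pp k 2 y a 0 * Pp k 3 y b 0
     + monom 1 (k - i) * Pp k 4 y a b"

definition phi :: "nat \<Rightarrow> nat \<Rightarrow> nat \<Rightarrow> nat \<Rightarrow> nat \<Rightarrow> (nat \<times> nat \<times> nat \<times> nat \<Rightarrow> 'a::comm_ring_1)
    \<Rightarrow> (nat \<times> nat \<times> nat \<Rightarrow> 'a)" where
  "phi m n p k i y = (\<lambda>(a,b,l). if (a,b,l) \<in> jet_vars m n k then coeff (Mf p k i y a b) l else 0)"

definition Wp :: "nat \<Rightarrow> nat \<Rightarrow> nat \<Rightarrow> (nat \<times> nat \<times> nat \<times> nat) set" where
  "Wp m n k = {0..<5} \<times> {0..<m+n} \<times> {0..<m+n} \<times> {0..<k}"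

lemma finite_Wp: "finite (Wp m n k)" unfolding Wp_def by auto

lemma phi_aff: "phi m n p k i y \<in> affine_space (jet_vars m n k)"
  unfolding affine_space_def phi_def by auto

lemma jet_entry_phi:
  assumes "a < m" "b < n"
  shows "jet_entry k (phi m n p k i y) a b = ptrunc k (Mf p k i y a b)"
  by (rule poly_eqI) (use assms in \<open>simp add: jet_entry_coeff coeff_ptrunc phi_def jet_vars_def\<close>)

lemma pp_Pp: "t < 5 \<Longrightarrow> a < m + n \<Longrightarrow> b < m + n \<Longrightarrow> (\<lambda>y. Pp k t y a b) \<in> pp (Wp m n k)"
  unfolding Pp_def by (rule pp_sum) (auto intro!: pp_monom simp: Wp_def)

lemma pp_Mf:
  assumes "p < m" "a < m" "b < n"
  shows "(\<lambda>y. Mf p k i y a b) \<in> pp (Wp m n k)"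
proof -
  have s: "(\<lambda>y. \<Sum>c<p. Pp k 0 y a c * Pp k 1 y c b) \<in> pp (Wp m n k)"
    by (rule pp_sum) (use assms in \<open>auto intro!: pp_mult pp_Pp\<close>)
  have t: "(\<lambda>y. monom 1 i * Pp k 2 y a 0 * Pp k 3 y b 0) \<in> pp (Wp m n k)"
    using assms by (auto intro!: pp_mult pp_Pp pp_const)
  have u: "(\<lambda>y. monom 1 (k - i) * Pp k 4 y a b) \<in> pp (Wp m n k)"
    using assms by (auto intro!: pp_mult pp_Pp pp_const)
  show ?thesis unfolding Mf_def using pp_add[OF pp_add[OF s t] u] by simp
qed

lemma phi_polyfun:
  assumes "p < m" "v \<in> jet_vars m n k"
  shows "(\<lambda>y. phi m n p k i y v) \<in> polyfun (Wp m n k)"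
proof -
  obtain a b l where v: "v = (a, b, l)" by (cases v) auto
  have ab: "a < m" "b < n" using assms(2) v by (auto simp: jet_vars_def)
  have eq: "(\<lambda>y. phi m n p k i y v) = (\<lambda>y. coeff (Mf p k i y a b) l)"
    using assms(2) v by (auto simp: phi_def)
  show ?thesis unfolding eq by (rule pp_coeff[OF pp_Mf[OF assms(1) ab]])
qed

lemma phi_minor_dvd:
  assumes ik: "2 * i \<le> k" and q: "1 \<le> q"
    and F: "\<And>a. a < p + q \<Longrightarrow> F a < m" and G: "\<And>b. b < p + q \<Longrightarrow> G b < n"
  shows "monom 1 (i + (q - 1) * (k - i)) dvd jet_minor k (p + q) F G (phi m n p k i y)"
proof -
  obtain E' where E': "\<And>a b. ptrunc k ((\<Sum>c<p. Pp k 0 y a c * Pp k 1 y c b) + monom 1 i * Pp k 2 y a 0 * Pp k 3 y b 0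
     + monom 1 (k - i) * Pp k 4 y a b) = (\<Sum>c<p. Pp k 0 y a c * Pp k 1 y c b) + monom 1 i * Pp k 2 y a 0 * Pp k 3 y b 0
     + monom 1 (k - i) * E' a b"
    using trunc_struct[where j=i and k=k and p=p and A="Pp k 0 y" and B="Pp k 1 y" and C="\<lambda>a. Pp k 2 y a 0"
      and D="\<lambda>b. Pp k 3 y b 0" and E="Pp k 4 y"] ik by auto
  have X: "jet_entry k (phi m n p k i y) (F a) (G b) = (\<Sum>c<p. Pp k 0 y (F a) c * Pp k 1 y c (G b))
      + monom 1 i * Pp k 2 y (F a) 0 * Pp k 3 y (G b) 0 + monom 1 (k - i) * E' (F a) (G b)"
    if "a < p + q" "b < p + q" for a b
  proof -
    have "jet_entry k (phi m n p k i y) (F a) (G b) = ptrunc k (Mf p k i y (F a) (G b))"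
      by (rule jet_entry_phi) (use F G that in auto)
    also have "\<dots> = (\<Sum>c<p. Pp k 0 y (F a) c * Pp k 1 y c (G b))
      + monom 1 i * Pp k 2 y (F a) 0 * Pp k 3 y (G b) 0 + monom 1 (k - i) * E' (F a) (G b)"
      unfolding Mf_def by (rule E')
    finally show ?thesis .
  qed
  show ?thesis unfolding jet_minor_def
    by (rule minor_struct[where A = "Pp k 0 y" and B = "Pp k 1 y" and C = "\<lambda>a. Pp k 2 y a 0"
          and D = "\<lambda>b. Pp k 3 y b 0" and E = E' and Xe = "jet_entry k (phi m n p k i y)"
          and F = F and G = G and p = p and q = q and j = i and k = k, OF X ik q])
qed

lemma tdvd_jet_minor_zero:
  "monom 1 e dvd jet_minor k s F G x \<Longrightarrow> l < e \<Longrightarrow> coeff (jet_minor k s F G x) l = 0"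
  by (rule tdvd_coeff)

lemma phi_in_Z:
  assumes ik: "2 * i \<le> k" and r: "r = p + 2"
  shows "phi m n p k i y \<in> jet_det_variety m n r k"
  unfolding jet_det_variety_def
proof (intro CollectI conjI allI impI phi_aff)
  fix F G l
  assume FG: "strict_mono_on {0..<r} F \<and> F ` {0..<r} \<subseteq> {0..<m} \<and> strict_mono_on {0..<r} G \<and> G ` {0..<r} \<subseteq> {0..<n}"
  assume l: "l < k"
  have "monom 1 (i + (2 - 1) * (k - i)) dvd jet_minor k (p + 2) F G (phi m n p k i y)"
    by (rule phi_minor_dvd[OF ik]) (use FG r in \<open>auto simp: image_subset_iff\<close>)
  moreover have "i + (2 - 1) * (k - i) = k" using ik by simp
  ultimately show "coeff (jet_minor k r F G (phi m n p k i y)) l = 0"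
    using l r tdvd_coeff by metis
qed

definition Dl :: "nat \<Rightarrow> nat \<Rightarrow> (nat \<times> nat \<times> nat \<Rightarrow> 'a::comm_ring_1) \<Rightarrow> 'a" where
  "Dl p k x = coeff (jet_minor k p id id x) 0"
definition gg :: "nat \<Rightarrow> nat \<Rightarrow> nat \<Rightarrow> (nat \<times> nat \<times> nat \<Rightarrow> 'a::comm_ring_1) \<Rightarrow> 'a" where
  "gg p k i x = coeff (jet_minor k (p + 1) id id x) i"
definition hh :: "nat \<Rightarrow> nat \<Rightarrow> nat \<Rightarrow> (nat \<times> nat \<times> nat \<Rightarrow> 'a::comm_ring_1) \<Rightarrow> 'a" where
  "hh p k i x = coeff (jet_minor k (p + 3) id id x) (2 * k - i)"
definition ff :: "nat \<Rightarrow> nat \<Rightarrow> nat \<Rightarrow> (nat \<times> nat \<times> nat \<Rightarrow> 'a::comm_ring_1) \<Rightarrow> 'a" where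
  "ff p k i x = (if i = 0 then Dl p k x * gg p k 0 x else Dl p k x * gg p k i x * hh p k i x)"

lemma pp_jet_entry: "a < m \<Longrightarrow> b < n \<Longrightarrow> (\<lambda>x. jet_entry k x a b) \<in> pp (jet_vars m n k)"
  unfolding jet_entry_def by (rule pp_sum) (auto intro!: pp_monom simp: jet_vars_def)

lemma polyfun_jet_minor:
  assumes "\<And>a. a < s \<Longrightarrow> F a < m" "\<And>b. b < s \<Longrightarrow> G b < n"
  shows "(\<lambda>x. coeff (jet_minor k s F G x) l) \<in> polyfun (jet_vars m n k)"
  unfolding jet_minor_def
  by (rule pp_coeff, rule pp_det[of s "\<lambda>x a b. jet_entry k x (F a) (G b)", simplified])
    (use assms in \<open>auto intro: pp_jet_entry\<close>)

lemma ff_polyfun: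
  assumes "p + 3 \<le> m" "m \<le> n"
  shows "ff p k i \<in> polyfun (jet_vars m n k)"
proof -
  have D: "Dl p k \<in> polyfun (jet_vars m n k)"
    unfolding Dl_def[abs_def] by (rule polyfun_jet_minor) (use assms in auto)
  have g: "gg p k j \<in> polyfun (jet_vars m n k)" for j
    unfolding gg_def[abs_def] by (rule polyfun_jet_minor) (use assms in auto)
  have h: "hh p k j \<in> polyfun (jet_vars m n k)" for j
    unfolding hh_def[abs_def] by (rule polyfun_jet_minor) (use assms in auto)
  show ?thesis
  proof (cases "i = 0")
    case True
    then show ?thesis unfolding ff_def[abs_def] using polyfun.pf_mult[OF D g] by simp
  next
    case False
    then show ?thesis unfolding ff_def[abs_def] using polyfun.pf_mult[OF polyfun.pf_mult[OF D g] h] by simp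
  qed
qed

lemma ff_sep:
  assumes "p + 3 \<le> m" "m \<le> n" and ij: "i \<noteq> j" and i: "2 * i \<le> k" and j: "2 * j \<le> k"
  shows "ff p k i (phi m n p k j y) = 0"
proof (cases "i < j")
  case True
  have "monom 1 (j + (1 - 1) * (k - j)) dvd jet_minor k (p + 1) id id (phi m n p k j y)"
    by (rule phi_minor_dvd[OF j]) (use assms in auto)
  then have "gg p k i (phi m n p k j y) = 0" unfolding gg_def using True tdvd_coeff by simp
  then show ?thesis unfolding ff_def by (cases "i = 0") simp_all
next
  case False
  then have ji: "j < i" using ij by simp
  have "monom 1 (j + (3 - 1) * (k - j)) dvd jet_minor k (p + 3) id id (phi m n p k j y)"
    by (rule phi_minor_dvd[OF j]) (use assms in auto)
  moreover have "2 * k - i < j + (3 - 1) * (k - j)" using ji i j by simp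
  ultimately have "hh p k i (phi m n p k j y) = 0" unfolding hh_def using tdvd_coeff by blast
  moreover have "i \<noteq> 0" using ji by simp
  ultimately show ?thesis unfolding ff_def by simp
qed

definition testpt :: "nat \<Rightarrow> (nat \<times> nat \<times> nat \<times> nat \<Rightarrow> 'a::comm_ring_1)" where
  "testpt p = (\<lambda>(t,a,b,l). if l = 0 \<and> ((t = 0 \<or> t = 1) \<and> a = b \<and> a < p \<or> (t = 2 \<or> t = 3) \<and> a = p \<and> b = 0
      \<or> t = 4 \<and> a = b \<and> (a = p + 1 \<or> a = p + 2)) then 1 else 0)"

definition dg :: "nat \<Rightarrow> nat \<Rightarrow> nat \<Rightarrow> nat \<Rightarrow> 'a::comm_ring_1 poly" where
  "dg p k i a = (if a < p then 1 else if a = p then monom 1 i else if a = p + 1 \<or> a = p + 2 then monom 1 (k - i) else 0)"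

lemma sum_monom_delta0: "1 \<le> k \<Longrightarrow> (\<Sum>l<k. monom (if l = 0 then c else 0) l) = monom c 0"
  by (subst sum.cong[OF refl, of _ _ "\<lambda>l. if l = 0 then monom c 0 else 0"]) auto

lemma monom_if01: "monom (if P then 1 else 0) 0 = (if P then 1 else (0::'a::comm_ring_1 poly))"
  by (cases P) (auto simp: monom_0 one_pCons)

lemma Pp_testpt:
  assumes "1 \<le> k"
  shows "Pp k t (testpt p) a b = (if (t = 0 \<or> t = 1) \<and> a = b \<and> a < p \<or> (t = 2 \<or> t = 3) \<and> a = p \<and> b = 0
      \<or> t = 4 \<and> a = b \<and> (a = p + 1 \<or> a = p + 2) then 1 else 0)"
proof -
  have "Pp k t (testpt p) a b = (\<Sum>l<k. monom (if l = 0 then (if (t = 0 \<or> t = 1) \<and> a = b \<and> a < p \<or> (t = 2 \<or> t = 3) \<and> a = p \<and> b = 0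
      \<or> t = 4 \<and> a = b \<and> (a = p + 1 \<or> a = p + 2) then 1 else 0) else 0) l)"
    unfolding Pp_def testpt_def by (rule sum.cong) auto
  also have "\<dots> = monom (if (t = 0 \<or> t = 1) \<and> a = b \<and> a < p \<or> (t = 2 \<or> t = 3) \<and> a = p \<and> b = 0
      \<or> t = 4 \<and> a = b \<and> (a = p + 1 \<or> a = p + 2) then 1 else 0) 0"
    by (rule sum_monom_delta0[OF assms])
  also have "\<dots> = (if (t = 0 \<or> t = 1) \<and> a = b \<and> a < p \<or> (t = 2 \<or> t = 3) \<and> a = p \<and> b = 0
      \<or> t = 4 \<and> a = b \<and> (a = p + 1 \<or> a = p + 2) then 1 else 0)"
    by (rule monom_if01)
  finally show ?thesis .
qed

lemma Mf_testpt:
  assumes "1 \<le> k"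
  shows "Mf p k i (testpt p) a b = (if a = b then dg p k i a else 0)"
proof -
  have s: "(\<Sum>c<p. Pp k 0 (testpt p) a c * Pp k 1 (testpt p) c b) = (if a = b \<and> a < p then 1 else 0)"
    by (subst sum.cong[OF refl, of _ _ "\<lambda>c. if c = a then (if a = b \<and> a < p then 1 else 0) else 0"])
      (auto simp: Pp_testpt[OF assms])
  show ?thesis unfolding Mf_def s by (auto simp: Pp_testpt[OF assms] dg_def)
qed

lemma jet_entry_testpt:
  assumes "1 \<le> k" "a < m" "b < n"
  shows "jet_entry k (phi m n p k i (testpt p)) a b = (if a = b then ptrunc k (dg p k i a) else 0)"
  unfolding jet_entry_phi[OF assms(2,3)] Mf_testpt[OF assms(1)]
  by (auto simp: ptrunc_def)

lemma minor_testpt: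
  assumes "1 \<le> k" "s \<le> m" "s \<le> n"
  shows "jet_minor k s id id (phi m n p k i (testpt p)) = (\<Prod>a<s. ptrunc k (dg p k i a))"
proof -
  have eq: "mat s s (\<lambda>(a,b). jet_entry k (phi m n p k i (testpt p)) (id a) (id b)) =
        mat s s (\<lambda>(a,b). if a = b then ptrunc k (dg p k i a) else 0)"
    by (rule eq_matI) (use assms in \<open>auto simp: jet_entry_testpt\<close>)
  show ?thesis unfolding jet_minor_def eq by (rule det_diag)
qed

lemma ptrunc_monom: "j < k \<Longrightarrow> ptrunc k (monom 1 j :: 'a::comm_ring_1 poly) = monom 1 j"
  by (rule ptrunc_id) (cases "(1::'a) = 0", auto simp: degree_monom_eq)

lemma ptrunc_one: "1 \<le> k \<Longrightarrow> ptrunc k (1 :: 'a::comm_ring_1 poly) = 1"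
  by (rule ptrunc_id) auto

lemma prod_dg_lt: "(\<Prod>a<p. ptrunc k (dg p k i a)) = (ptrunc k 1 :: 'a::comm_ring_1 poly) ^ p"
  by (subst prod.cong[OF refl, of _ _ "\<lambda>_. ptrunc k 1"]) (auto simp: dg_def)

lemma ff_testpt:
  fixes dummy :: "'a::field"
  assumes k: "1 \<le> k" and ik: "2 * i \<le> k" and pm: "p + 3 \<le> m" "m \<le> n"
  shows "ff p k i (phi m n p k i (testpt p) :: nat \<times> nat \<times> nat \<Rightarrow> 'a) \<noteq> 0"
proof -
  have ik': "i < k" using ik k by simp
  have D: "Dl p k (phi m n p k i (testpt p) :: nat \<times> nat \<times> nat \<Rightarrow> 'a) = 1"
    unfolding Dl_def using pm by (simp add: minor_testpt[OF k] prod_dg_lt ptrunc_one[OF k])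
  have g: "gg p k i (phi m n p k i (testpt p) :: nat \<times> nat \<times> nat \<Rightarrow> 'a) = 1"
    unfolding gg_def using pm ik'
    by (simp add: minor_testpt[OF k] prod_dg_lt ptrunc_one[OF k] dg_def ptrunc_monom)
  have h: "hh p k i (phi m n p k i (testpt p) :: nat \<times> nat \<times> nat \<Rightarrow> 'a) = 1" if i0: "i \<noteq> 0"
  proof -
    have ki: "k - i < k" using i0 ik' by simp
    have "(\<Prod>a<p + 3. ptrunc k (dg p k i a)) = (monom 1 i * monom 1 (k - i) * monom 1 (k - i) :: 'a poly)"
      by (simp add: numeral_3_eq_3 prod_dg_lt ptrunc_one[OF k] dg_def ptrunc_monom[OF ik'] ptrunc_monom[OF ki])
    also have "\<dots> = monom 1 (2 * k - i)" using ik' by (simp add: mult_monom mult_2)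
    finally show ?thesis unfolding hh_def using pm by (simp add: minor_testpt[OF k])
  qed
  show ?thesis unfolding ff_def using D g h by auto
qed

lemma Z_minor_dvd:
  assumes x: "x \<in> jet_det_variety m n r k"
    and F: "strict_mono_on {0..<r} F" "F ` {0..<r} \<subseteq> {0..<m}"
    and G: "strict_mono_on {0..<r} G" "G ` {0..<r} \<subseteq> {0..<n}"
  shows "monom 1 k dvd jet_minor k r F G x"
  using x F G unfolding jet_det_variety_def by (auto simp: monom_1_dvd_iff')

lemma ext_idx_id: "a < p + 1 \<Longrightarrow> ext_idx p (\<lambda>_. p) a = a"
  by (simp add: ext_idx_def)

lemma ext_idx_shift: "ext_idx p (\<lambda>i. p + i) a = a"
  by (simp add: ext_idx_def)

lemma ext_idx_mono:
  assumes "\<And>i. i < 2 \<Longrightarrow> p \<le> F i" "F 0 < F 1"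
  shows "strict_mono_on {0..<p+2} (ext_idx p F)"
proof (rule strict_mono_onI)
  fix a b assume ab: "a \<in> {0..<p+2}" "b \<in> {0..<p+2}" "a < b"
  show "ext_idx p F a < ext_idx p F b"
  proof (cases "b < p")
    case True then show ?thesis using ab by (simp add: ext_idx_def)
  next
    case False
    then have b: "b - p < 2" using ab by auto
    show ?thesis
    proof (cases "a < p")
      case True then show ?thesis using False assms(1)[OF b] by (simp add: ext_idx_def)
    next
      case False
      then have "a - p = 0" "b - p = 1" using ab \<open>\<not> b < p\<close> by auto
      then show ?thesis using False \<open>\<not> b < p\<close> assms(2) by (simp add: ext_idx_def)
    qed
  qed
qed

lemma coeff_0_power: "coeff (d ^ j) 0 = coeff (d :: 'a::comm_ring_1 poly) 0 ^ j"
  by (induction j) (auto simp: coeff_mult_0)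

context
  fixes m n r p k i :: nat and x :: "nat \<times> nat \<times> nat \<Rightarrow> 'a::field"
  assumes x: "x \<in> jet_det_variety m n r k" and r: "r = p + 2" and pm: "p + 3 \<le> m" "m \<le> n"
    and ik: "2 * i \<le> k" and k1: "1 \<le> k" and fx: "ff p k i x \<noteq> 0"
begin

definition "MM = jet_entry k x"
definition "\<delta> = det (mat p p (\<lambda>(a,b). MM a b))"
definition "YY = schur_Y p MM"

lemma delta_jet: "\<delta> = jet_minor k p id id x"
  unfolding \<delta>_def jet_minor_def MM_def by simp

lemma Dl_ne: "coeff \<delta> 0 \<noteq> 0"
  using fx unfolding delta_jet ff_def Dl_def by (auto split: if_splits)

lemma delta_ne: "\<delta> \<noteq> 0" using Dl_ne by auto

lemma Z1: "YY p p = jet_minor k (p + 1) id id x"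
proof -
  have "\<delta> ^ (1 - 1) * det (mat (p+1) (p+1) (\<lambda>(a,b). MM (ext_idx p (\<lambda>_. p) a) (ext_idx p (\<lambda>_. p) b)))
    = det (mat 1 1 (\<lambda>(i,j). schur_Y p MM ((\<lambda>_. p) i) ((\<lambda>_. p) j)))"
    using schur_det[of 1 p MM "\<lambda>_. p" "\<lambda>_. p"] delta_ne unfolding \<delta>_def by simp
  also have "\<dots> = YY p p" unfolding YY_def by (subst det_single) auto
  also have "mat (p+1) (p+1) (\<lambda>(a,b). MM (ext_idx p (\<lambda>_. p) a) (ext_idx p (\<lambda>_. p) b))
      = mat (p+1) (p+1) (\<lambda>(a,b). jet_entry k x (id a) (id b))"
    by (rule eq_matI) (auto simp: ext_idx_id MM_def)
  finally show ?thesis unfolding jet_minor_def by simp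
qed

lemma Z3: "\<delta> ^ 2 * jet_minor k (p + 3) id id x = det (mat 3 3 (\<lambda>(i,j). YY (p + i) (p + j)))"
proof -
  have "\<delta> ^ (3 - 1) * det (mat (p+3) (p+3) (\<lambda>(a,b). MM (ext_idx p (\<lambda>i. p + i) a) (ext_idx p (\<lambda>i. p + i) b)))
    = det (mat 3 3 (\<lambda>(i,j). schur_Y p MM ((\<lambda>i. p + i) i) ((\<lambda>i. p + i) j)))"
    using schur_det[of 3 p MM "\<lambda>i. p + i" "\<lambda>i. p + i"] delta_ne unfolding \<delta>_def by simp
  then show ?thesis unfolding jet_minor_def YY_def MM_def ext_idx_shift by simp
qed

lemma Z2:
  assumes a: "p \<le> a1" "a1 < a2" "a2 < m" and b: "p \<le> b1" "b1 < b2" "b2 < n"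
  shows "monom 1 k dvd (YY a1 b1 * YY a2 b2 - YY a1 b2 * YY a2 b1)"
proof -
  define F where "F i = (if i = 0 then a1 else a2)" for i :: nat
  define G where "G i = (if i = 0 then b1 else b2)" for i :: nat
  have "\<delta> ^ (2 - 1) * det (mat (p+2) (p+2) (\<lambda>(a,b). MM (ext_idx p F a) (ext_idx p G b)))
    = det (mat 2 2 (\<lambda>(i,j). schur_Y p MM (F i) (G j)))"
    using schur_det[of 2 p MM F G] delta_ne unfolding \<delta>_def by simp
  also have "\<dots> = YY a1 b1 * YY a2 b2 - YY a1 b2 * YY a2 b1"
    unfolding det2 YY_def F_def G_def by simp
  finally have eq: "\<delta> * jet_minor k r (ext_idx p F) (ext_idx p G) x = YY a1 b1 * YY a2 b2 - YY a1 b2 * YY a2 b1"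
    unfolding jet_minor_def MM_def r by simp
  have "monom 1 k dvd jet_minor k r (ext_idx p F) (ext_idx p G) x"
  proof (rule Z_minor_dvd[OF x])
    show "strict_mono_on {0..<r} (ext_idx p F)" unfolding r by (rule ext_idx_mono) (use a in \<open>auto simp: F_def\<close>)
    show "strict_mono_on {0..<r} (ext_idx p G)" unfolding r by (rule ext_idx_mono) (use b in \<open>auto simp: G_def\<close>)
    show "ext_idx p F ` {0..<r} \<subseteq> {0..<m}" using a pm r by (auto simp: ext_idx_def F_def)
    show "ext_idx p G ` {0..<r} \<subseteq> {0..<n}" using b pm r by (auto simp: ext_idx_def G_def)
  qed
  then show ?thesis unfolding eq[symmetric] by simp
qed

lemma Z2':
  assumes "a \<in> {p..<m}" "a' \<in> {p..<m}" "b \<in> {p..<n}" "b' \<in> {p..<n}"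
  shows "monom 1 k dvd (YY a b * YY a' b' - YY a b' * YY a' b)"
proof -
  consider "a = a'" | "b = b'" | "a < a'" "b < b'" | "a < a'" "b' < b" | "a' < a" "b < b'" | "a' < a" "b' < b"
    by linarith
  then show ?thesis
  proof cases
    case 1 then show ?thesis by (simp add: mult.commute)
  next
    case 2 then show ?thesis by (simp add: mult.commute)
  next
    case 3 then show ?thesis using Z2[of a a' b b'] assms by auto
  next
    case 4
    then have "monom 1 k dvd (YY a b' * YY a' b - YY a b * YY a' b')" using Z2[of a a' b' b] assms by auto
    then show ?thesis by (metis dvd_minus_iff minus_diff_eq)
  next
    case 5
    then have "monom 1 k dvd (YY a' b * YY a b' - YY a' b' * YY a b)" using Z2[of a' a b b'] assms by auto
    then show ?thesis by (metis dvd_minus_iff minus_diff_eq mult.commute)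
  next
    case 6
    then have "monom 1 k dvd (YY a' b' * YY a b - YY a' b * YY a b')" using Z2[of a' a b' b] assms by auto
    then show ?thesis by (simp add: mult.commute)
  qed
qed

lemma claimA: "\<forall>a\<in>{p..<m}. \<forall>b\<in>{p..<n}. monom 1 i dvd YY a b"
proof (rule ccontr)
  assume "\<not> ?thesis"
  then obtain a0 b0 l0 where ab0: "a0 \<in> {p..<m}" "b0 \<in> {p..<n}" "l0 < i" "coeff (YY a0 b0) l0 \<noteq> 0"
    by (auto simp: monom_1_dvd_iff')
  define P where "P l = (\<exists>a\<in>{p..<m}. \<exists>b\<in>{p..<n}. coeff (YY a b) l \<noteq> 0)" for l
  define e where "e = (LEAST l. P l)"
  have Pl0: "P l0" unfolding P_def using ab0 by blast
  have Pe: "P e" unfolding e_def using Pl0 by (rule LeastI)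
  have el0: "e \<le> l0" unfolding e_def using Pl0 by (rule Least_le)
  then have ei: "e < i" using ab0 by simp
  obtain u v where uv: "u \<in> {p..<m}" "v \<in> {p..<n}" "coeff (YY u v) e \<noteq> 0" using Pe unfolding P_def by blast
  have dv: "monom 1 e dvd YY a b" if "a \<in> {p..<m}" "b \<in> {p..<n}" for a b
  proof -
    have "coeff (YY a b) l = 0" if "l < e" for l
      using not_less_Least[OF that[unfolded e_def]] \<open>a \<in> _\<close> \<open>b \<in> _\<close> unfolding P_def by blast
    then show ?thesis by (simp add: monom_1_dvd_iff')
  qed
  have i0: "i \<noteq> 0" using ei by simp
  have hx: "hh p k i x \<noteq> 0" using fx i0 unfolding ff_def by auto
  obtain c d E where cdE: "\<forall>a\<in>{p..<m}. \<forall>b\<in>{p..<n}. YY a b = monom 1 e * c a * d b + monom 1 (k - e) * E a b"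
    using rank1[of "{p..<m}" "{p..<n}" e YY u v k, OF dv uv Z2'] ei ik by auto
  have "monom 1 (e + (3 - 1) * (k - e)) dvd det (mat (0 + 3) (0 + 3) (\<lambda>(a,b). YY ((\<lambda>i. p + i) a) ((\<lambda>i. p + i) b)))"
  proof (rule minor_struct[where A = "\<lambda>_ _. 0" and B = "\<lambda>_ _. 0" and C = c and D = d and E = E and j = e and k = k])
    fix ia jj :: nat assume "ia < 0 + 3" "jj < 0 + 3"
    then show "YY (p + ia) (p + jj) = (\<Sum>c<0. 0 * 0) + monom 1 e * c (p + ia) * d (p + jj) + monom 1 (k - e) * E (p + ia) (p + jj)"
      using cdE pm by auto
  qed (use ei ik in auto)
  moreover have "e + (3 - 1) * (k - e) = 2 * k - e" using ei ik by simp
  ultimately have "monom 1 (2 * k - e) dvd \<delta> ^ 2 * jet_minor k (p + 3) id id x"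
    unfolding Z3 by simp
  then have "monom 1 (2 * k - e) dvd jet_minor k (p + 3) id id x"
    by (rule tdvd_cancel_unit[rotated]) (simp add: coeff_0_power Dl_ne)
  then have "hh p k i x = 0" unfolding hh_def using ei ik by (intro tdvd_coeff) auto
  then show False using hx by simp
qed

lemma claimB: "\<exists>c d E. \<forall>a\<in>{p..<m}. \<forall>b\<in>{p..<n}. YY a b = monom 1 i * c a * d b + monom 1 (k - i) * E a b"
proof (rule rank1[of "{p..<m}" "{p..<n}" i YY p p k])
  show "monom 1 i dvd YY a b" if "a \<in> {p..<m}" "b \<in> {p..<n}" for a b using claimA that by blast
  show "p \<in> {p..<m}" "p \<in> {p..<n}" using pm by auto
  have "gg p k i x \<noteq> 0" using fx unfolding ff_def by (auto split: if_splits)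
  then show "coeff (YY p p) i \<noteq> 0" unfolding Z1 gg_def .
qed (use Z2' ik in auto)


lemma ptrunc_jet_entry: "ptrunc k (jet_entry k x a b) = jet_entry k x a b"
  by (rule poly_eqI) (simp add: coeff_ptrunc jet_entry_coeff)

lemma x_in_range: "x \<in> range (phi m n p k i)"
proof -
  obtain c d E where cdE: "\<forall>a\<in>{p..<m}. \<forall>b\<in>{p..<n}. YY a b = monom 1 i * c a * d b + monom 1 (k - i) * E a b"
    using claimB by blast
  define c' where "c' a = (if p \<le> a then c a else 0)" for a
  define d' where "d' b = (if p \<le> b then d b else 0)" for b
  define E' where "E' a b = (if p \<le> a \<and> p \<le> b then E a b else 0)" for a b
  have Yall: "YY a b = monom 1 i * c' a * d' b + monom 1 (k - i) * E' a b" if ab: "a < m" "b < n" for a b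
  proof (cases "a < p")
    case True then show ?thesis unfolding YY_def c'_def E'_def by (simp add: schur_Y_row0)
  next
    case False
    show ?thesis
    proof (cases "b < p")
      case True then show ?thesis unfolding YY_def d'_def E'_def by (simp add: schur_Y_col0)
    next
      case False
      then show ?thesis using \<open>\<not> a < p\<close> cdE ab unfolding c'_def d'_def E'_def by auto
    qed
  qed
  obtain \<mu> where \<mu>: "monom 1 k dvd (\<mu> * \<delta> - 1)" using unit_inverse[OF Dl_ne] by blast
  define adjP where "adjP = adj_mat (mat p p (\<lambda>(a,b). MM a b))"
  define A where "A a c = MM a c" for a c
  define B where "B c b = \<mu> * (\<Sum>c'<p. adjP $$ (c,c') * MM c' b)" for c b
  define C where "C a = \<mu> * c' a" for a
  define E'' where "E'' a b = \<mu> * E' a b" for a b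
  define S where "S a b = (\<Sum>c<p. A a c * B c b) + monom 1 i * C a * d' b + monom 1 (k - i) * E'' a b" for a b
  have cong1: "pcong k (MM a b) (S a b)" if ab: "a < m" "b < n" for a b
  proof -
    have dM: "\<delta> * MM a b = (\<Sum>c<p. \<Sum>c'<p. MM a c * adjP $$ (c,c') * MM c' b) + YY a b"
      unfolding YY_def schur_Y_def \<delta>_def adjP_def by simp
    have sAB: "(\<Sum>c<p. A a c * B c b) = \<mu> * (\<Sum>c<p. \<Sum>c'<p. MM a c * adjP $$ (c,c') * MM c' b)"
      unfolding A_def B_def by (simp add: sum_distrib_left mult.assoc mult.left_commute)
    have "S a b = \<mu> * (\<delta> * MM a b)"
      unfolding S_def sAB dM Yall[OF ab] C_def E''_def by (simp add: algebra_simps)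
    moreover have "monom 1 k dvd (MM a b - \<mu> * (\<delta> * MM a b))"
    proof -
      have "monom 1 k dvd (\<mu> * \<delta> - 1) * MM a b" using \<mu> by simp
      then have "monom 1 k dvd - ((\<mu> * \<delta> - 1) * MM a b)" by (simp only: dvd_minus_iff)
      then show ?thesis by (simp add: algebra_simps)
    qed
    ultimately show ?thesis unfolding pcong_def by simp
  qed
  define y :: "nat \<times> nat \<times> nat \<times> nat \<Rightarrow> 'a" where "y = (\<lambda>(t,a,b,l). if t = 0 then coeff (A a b) l else if t = 1 then coeff (B a b) l
      else if t = 2 then coeff (C a) l else if t = 3 then coeff (d' a) l else coeff (E'' a b) l)"
  have Pp0: "Pp k 0 y a b = ptrunc k (A a b)" for a b unfolding Pp_def ptrunc_def y_def by simp
  have Pp1: "Pp k 1 y a b = ptrunc k (B a b)" for a b unfolding Pp_def ptrunc_def y_def by simp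
  have Pp2: "Pp k 2 y a b = ptrunc k (C a)" for a b unfolding Pp_def ptrunc_def y_def by simp
  have Pp3: "Pp k 3 y a b = ptrunc k (d' a)" for a b unfolding Pp_def ptrunc_def y_def by simp
  have Pp4: "Pp k 4 y a b = ptrunc k (E'' a b)" for a b unfolding Pp_def ptrunc_def y_def by simp
  have cong2: "pcong k (Mf p k i y a b) (S a b)" for a b
    unfolding Mf_def S_def Pp0 Pp1 Pp2 Pp3 Pp4
    by (intro pcong_add pcong_mult pcong_sum pcong_ptrunc pcong_refl)
  have "x = phi m n p k i y"
  proof
    fix v
    obtain a b l :: nat where v: "v = (a, b, l)" by (cases v) auto
    show "x v = phi m n p k i y v"
    proof (cases "v \<in> jet_vars m n k")
      case True
      then have abl: "a < m" "b < n" "l < k" using v by (auto simp: jet_vars_def)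
      have "ptrunc k (Mf p k i y a b) = ptrunc k (MM a b)"
        by (rule pcong_ptrunc_eq) (rule pcong_trans[OF cong2 pcong_sym[OF cong1[OF abl(1,2)]]])
      also have "\<dots> = MM a b" unfolding MM_def by (rule ptrunc_jet_entry)
      finally have "coeff (Mf p k i y a b) l = coeff (MM a b) l"
        using abl by (metis coeff_ptrunc)
      then show ?thesis using True v abl by (simp add: phi_def MM_def jet_entry_coeff)
    next
      case False
      have "x \<in> affine_space (jet_vars m n k)" using x unfolding jet_det_variety_def by simp
      then have "x v = 0" using False unfolding affine_space_def by blast
      then show ?thesis using False v by (simp add: phi_def)
    qed
  qed
  then show ?thesis by blast
qed

end

lemma Z_closed: "zariski_closed (jet_vars m n k) (jet_det_variety m n r k :: (nat \<times> nat \<times> nat \<Rightarrow> 'a::comm_ring_1) set)"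
proof -
  define P :: "((nat \<times> nat \<times> nat \<Rightarrow> 'a) \<Rightarrow> 'a) set" where
    "P = {q. \<exists>F G l. strict_mono_on {0..<r} F \<and> F ` {0..<r} \<subseteq> {0..<m} \<and>
              strict_mono_on {0..<r} G \<and> G ` {0..<r} \<subseteq> {0..<n} \<and> l < k \<and> q = (\<lambda>x. coeff (jet_minor k r F G x) l)}"
  have "P \<subseteq> polyfun (jet_vars m n k)"
  proof
    fix q assume "q \<in> P"
    then obtain F G l where FG: "F ` {0..<r} \<subseteq> {0..<m}" "G ` {0..<r} \<subseteq> {0..<n}" and q: "q = (\<lambda>x. coeff (jet_minor k r F G x) l)"
      unfolding P_def by blast
    show "q \<in> polyfun (jet_vars m n k)" unfolding q
      by (rule polyfun_jet_minor) (use FG in \<open>auto simp: image_subset_iff\<close>)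
  qed
  moreover have "jet_det_variety m n r k = {x \<in> affine_space (jet_vars m n k). \<forall>q\<in>P. q x = 0}"
  proof (intro equalityI subsetI)
    fix x :: "nat \<times> nat \<times> nat \<Rightarrow> 'a"
    assume x: "x \<in> jet_det_variety m n r k"
    have "q x = 0" if qP: "q \<in> P" for q
    proof -
      obtain F G l where FG: "strict_mono_on {0..<r} F \<and> F ` {0..<r} \<subseteq> {0..<m} \<and>
              strict_mono_on {0..<r} G \<and> G ` {0..<r} \<subseteq> {0..<n}" and l: "l < k"
        and q: "q = (\<lambda>x. coeff (jet_minor k r F G x) l)"
        using qP unfolding P_def by blast
      have "\<forall>F G. strict_mono_on {0..<r} F \<and> F ` {0..<r} \<subseteq> {0..<m} \<and>
              strict_mono_on {0..<r} G \<and> G ` {0..<r} \<subseteq> {0..<n} \<longrightarrow>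
              (\<forall>l<k. coeff (jet_minor k r F G x) l = 0)"
        using x unfolding jet_det_variety_def by blast
      then show ?thesis using FG l unfolding q by blast
    qed
    moreover have "x \<in> affine_space (jet_vars m n k)" using x unfolding jet_det_variety_def by blast
    ultimately show "x \<in> {x \<in> affine_space (jet_vars m n k). \<forall>q\<in>P. q x = 0}" by blast
  next
    fix x :: "nat \<times> nat \<times> nat \<Rightarrow> 'a"
    assume x: "x \<in> {x \<in> affine_space (jet_vars m n k). \<forall>q\<in>P. q x = 0}"
    show "x \<in> jet_det_variety m n r k" unfolding jet_det_variety_def
    proof (intro CollectI conjI allI impI)
      show "x \<in> affine_space (jet_vars m n k)" using x by simp
      fix F G l
      assume FG: "strict_mono_on {0..<r} F \<and> F ` {0..<r} \<subseteq> {0..<m} \<and> strict_mono_on {0..<r} G \<and> G ` {0..<r} \<subseteq> {0..<n}"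
        and l: "l < k"
      have mem: "(\<lambda>x. coeff (jet_minor k r F G x) l) \<in> P" unfolding P_def using FG l by blast
      have all: "\<forall>q\<in>P. q x = 0" using x by simp
      show "coeff (jet_minor k r F G x) l = 0" using bspec[OF all mem] by simp
    qed
  qed
  ultimately show ?thesis unfolding zariski_closed_def by blast
qed

theorem theorem6p1:
  fixes m n r k :: nat
  assumes "alg_closed TYPE('a::field)"
    and "2 \<le> r" and "r < m" and "m \<le> n" and "1 \<le> k"
  shows "\<exists>Cs \<subseteq> irreducible_components (jet_vars m n k)
                  (jet_det_variety m n r k :: (nat \<times> nat \<times> nat \<Rightarrow> 'a) set).
           finite Cs \<and> 1 + k div 2 \<le> card Cs"
proof -
  define p where "p = r - 2"
  have r: "r = p + 2" and pm: "p + 3 \<le> m" "m \<le> n" and pm': "p < m"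
    using assms unfolding p_def by auto
  have k1: "1 \<le> k" using assms by simp
  have inf: "infinite (UNIV :: 'a set)" by (rule alg_closed_infinite[OF assms(1)])
  define V where "V = jet_vars m n k"
  define Z :: "(nat \<times> nat \<times> nat \<Rightarrow> 'a) set" where "Z = jet_det_variety m n r k"
  define CC :: "nat \<Rightarrow> (nat \<times> nat \<times> nat \<Rightarrow> 'a) set" where "CC i = zcl V (range (phi m n p k i))" for i
  have comp: "CC i \<in> irreducible_components V Z" if i: "i \<in> {0..k div 2}" for i
  proof -
    have ik: "2 * i \<le> k" using i by auto
    show ?thesis unfolding CC_def
    proof (rule component_crit[OF inf finite_Wp])
      show "zariski_closed V Z" unfolding V_def Z_def by (rule Z_closed)
      show "phi m n p k i y \<in> affine_space V" for y :: "nat \<times> nat \<times> nat \<times> nat \<Rightarrow> 'a"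
        unfolding V_def by (rule phi_aff)
      show "phi m n p k i y \<in> Z" for y :: "nat \<times> nat \<times> nat \<times> nat \<Rightarrow> 'a"
        unfolding Z_def by (rule phi_in_Z[OF ik r])
      show "(\<lambda>y. phi m n p k i y v) \<in> polyfun (Wp m n k)" if "v \<in> V" for v
        using phi_polyfun[OF pm'] that unfolding V_def by blast
      show "ff p k i \<in> polyfun V" unfolding V_def by (rule ff_polyfun[OF pm])
      show "ff p k i (phi m n p k i (testpt p)) \<noteq> (0::'a)" by (rule ff_testpt[OF k1 ik pm])
      show "x \<in> range (phi m n p k i)" if "x \<in> Z" "ff p k i x \<noteq> 0" for x
        using x_in_range[OF that(1)[unfolded Z_def] r pm ik k1 that(2)] .
    qed
  qed
  have inj: "inj_on CC {0..k div 2}"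
  proof (rule inj_onI)
    fix i j assume i: "i \<in> {0..k div 2}" and j: "j \<in> {0..k div 2}" and eq: "CC i = CC j"
    show "i = j"
    proof (rule ccontr)
      assume ij: "i \<noteq> j"
      have ik: "2 * i \<le> k" and jk: "2 * j \<le> k" using i j by auto
      have fi: "ff p k i \<in> polyfun V" unfolding V_def by (rule ff_polyfun[OF pm])
      have "phi m n p k i (testpt p) \<in> CC i"
        unfolding CC_def zcl_def V_def using phi_aff by blast
      moreover have "phi m n p k i (testpt p) \<notin> CC j"
        unfolding CC_def
      proof (rule zcl_sep[OF fi])
        show "\<forall>s\<in>range (phi m n p k j). ff p k i s = (0::'a)"
          using ff_sep[OF pm ij ik jk] by auto
        show "ff p k i (phi m n p k i (testpt p)) \<noteq> (0::'a)" by (rule ff_testpt[OF k1 ik pm])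
      qed
      ultimately show False using eq by simp
    qed
  qed
  define Cs where "Cs = CC ` {0..k div 2}"
  have "Cs \<subseteq> irreducible_components (jet_vars m n k) (jet_det_variety m n r k)"
    unfolding Cs_def using comp unfolding V_def Z_def by blast
  moreover have "finite Cs" unfolding Cs_def by simp
  moreover have "card Cs = 1 + k div 2" unfolding Cs_def using card_image[OF inj] by simp
  ultimately show ?thesis by auto
qed


end
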